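(* Let $\mathbb C$ be a homological category with finite colimits, and let $x\colon X\to A$, $y\colon Y\to A$ be morphisms whose images are normal monomorphisms. Then the following are equivalent: (a) the span $A/X\leftarrow A\to A/Y$ admits an internal pregroupoid structure; (b) the span $A/X\leftarrow A\to A/Y$ admits a unique internal pregroupoid structure; (c) $[(X,x),(Y,y)]_1=0$.
   Context: A homological category is a regular pointed category in which the Split Short Five Lemma holds; images are taken in the (regular epi, mono) factorization; a normal monomorphism is a kernel of some morphism. Notation: $\iota_i$ coproduct injections, $[a,b,c]$ copairing, $\langle\cdot\rangle$ pairing. $A_3=A\times_{A/X}A\times_{A/Y}A$ is the limit of $A\xrightarrow{\mathsf{coker}(x)}A/X\xleftarrow{\mathsf{coker}(x)}A\xrightarrow{\mathsf{coker}(y)}A/Y\xleftarrow{\mathsf{coker}(y)}A$. An internal pregroupoid structure on the span $A/X\leftarrow A\to A/Y$ is a morphism $p\colon A_3\to A$ with $p\langle\pi_1,\pi_2,\pi_2\rangle=\pi_1$ on $A\times_{A/X}A$ and $p\langle\pi_1,\pi_1,\pi_2\rangle=\pi_2$ on $A\times_{A/Y}A$ ($\pi_1,\pi_2$ the kernel-pair projections). $[(X,x),(Y,y)]_1$ denotes the $1$-weighted subobject commutator: the image under $[1_A,x,y]\colon A+X+Y\to A$ of the kernel of $\langle [\iota_1,\iota_2,0],[\iota_1,0,\iota_2]\rangle\colon A+X+Y\to (A+X)\times_A(A+Y)$, where $(A+X)\times_A(A+Y)$ is the pullback of $[1,0]\colon A+X\to A$ and $[1,0]\colon A+Y\to A$;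 "$=0$" means it is the zero subobject. *)

theory Defs
  imports Main
begin

record ('o,'a) cat =
  Obj :: "'o set"
  Arr :: "'a set"
  Dom :: "'a \<Rightarrow> 'o"
  Cod :: "'a \<Rightarrow> 'o"
  Id :: "'o \<Rightarrow> 'a"
  Comp :: "'a \<Rightarrow> 'a \<Rightarrow> 'a"   (* Comp C g f  =  g o f *)

definition hom :: "('o,'a) cat \<Rightarrow> 'o \<Rightarrow> 'o \<Rightarrow> 'a set" where
  "hom C X Y = {f \<in> Arr C. Dom C f = X \<and> Cod C f = Y}"

definition category :: "('o,'a) cat \<Rightarrow> bool" where
  "category C \<longleftrightarrow>
     (\<forall>f\<in>Arr C. Dom C f \<in> Obj C \<and> Cod C f \<in> Obj C) \<and>
     (\<forall>X\<in>Obj C. Id C X \<in> hom C X X) \<and>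
     (\<forall>f g. f \<in> Arr C \<and> g \<in> Arr C \<and> Cod C f = Dom C g \<longrightarrow>
        Comp C g f \<in> hom C (Dom C f) (Cod C g)) \<and>
     (\<forall>f\<in>Arr C. Comp C f (Id C (Dom C f)) = f \<and> Comp C (Id C (Cod C f)) f = f) \<and>
     (\<forall>f g h. f \<in> Arr C \<and> g \<in> Arr C \<and> h \<in> Arr C \<and> Cod C f = Dom C g \<and> Cod C g = Dom C h
        \<longrightarrow> Comp C h (Comp C g f) = Comp C (Comp C h g) f)"

definition mono :: "('o,'a) cat \<Rightarrow> 'a \<Rightarrow> bool" where
  "mono C m \<longleftrightarrow> m \<in> Arr C \<and>
     (\<forall>f g. f \<in> Arr C \<and> g \<in> Arr C \<and> Cod C f = Dom C m \<and> Cod C g = Dom C m \<and>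
        Dom C f = Dom C g \<and> Comp C m f = Comp C m g \<longrightarrow> f = g)"

definition iso :: "('o,'a) cat \<Rightarrow> 'a \<Rightarrow> bool" where
  "iso C f \<longleftrightarrow> f \<in> Arr C \<and>
     (\<exists>g\<in>hom C (Cod C f) (Dom C f). Comp C g f = Id C (Dom C f) \<and> Comp C f g = Id C (Cod C f))"

definition initial :: "('o,'a) cat \<Rightarrow> 'o \<Rightarrow> bool" where
  "initial C I \<longleftrightarrow> I \<in> Obj C \<and> (\<forall>Y\<in>Obj C. \<exists>!f. f \<in> hom C I Y)"

definition terminal :: "('o,'a) cat \<Rightarrow> 'o \<Rightarrow> bool" where
  "terminal C T \<longleftrightarrow> T \<in> Obj C \<and> (\<forall>Y\<in>Obj C. \<exists>!f. f \<in> hom C Y T)"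

definition zero_obj :: "('o,'a) cat \<Rightarrow> 'o \<Rightarrow> bool" where
  "zero_obj C Z \<longleftrightarrow> initial C Z \<and> terminal C Z"

definition pointed :: "('o,'a) cat \<Rightarrow> bool" where
  "pointed C \<longleftrightarrow> (\<exists>Z. zero_obj C Z)"

definition zero_mor :: "('o,'a) cat \<Rightarrow> 'a \<Rightarrow> bool" where
  "zero_mor C f \<longleftrightarrow> f \<in> Arr C \<and>
     (\<exists>Z u v. zero_obj C Z \<and> u \<in> hom C (Dom C f) Z \<and> v \<in> hom C Z (Cod C f) \<and> f = Comp C v u)"

definition is_pullback :: "('o,'a) cat \<Rightarrow> 'a \<Rightarrow> 'a \<Rightarrow> 'o \<Rightarrow> 'a \<Rightarrow> 'a \<Rightarrow> bool" where
  "is_pullback C f g P p q \<longleftrightarrow>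
     f \<in> Arr C \<and> g \<in> Arr C \<and> Cod C f = Cod C g \<and>
     p \<in> hom C P (Dom C f) \<and> q \<in> hom C P (Dom C g) \<and> Comp C f p = Comp C g q \<and>
     (\<forall>W u v. u \<in> hom C W (Dom C f) \<and> v \<in> hom C W (Dom C g) \<and> Comp C f u = Comp C g v \<longrightarrow>
        (\<exists>!h. h \<in> hom C W P \<and> Comp C p h = u \<and> Comp C q h = v))"

definition is_pushout :: "('o,'a) cat \<Rightarrow> 'a \<Rightarrow> 'a \<Rightarrow> 'o \<Rightarrow> 'a \<Rightarrow> 'a \<Rightarrow> bool" where
  "is_pushout C f g P p q \<longleftrightarrow>
     f \<in> Arr C \<and> g \<in> Arr C \<and> Dom C f = Dom C g \<and>
     p \<in> hom C (Cod C f) P \<and> q \<in> hom C (Cod C g) P \<and> Comp C p f = Comp C q g \<and>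
     (\<forall>W u v. u \<in> hom C (Cod C f) W \<and> v \<in> hom C (Cod C g) W \<and> Comp C u f = Comp C v g \<longrightarrow>
        (\<exists>!h. h \<in> hom C P W \<and> Comp C h p = u \<and> Comp C h q = v))"

definition finitely_complete :: "('o,'a) cat \<Rightarrow> bool" where
  "finitely_complete C \<longleftrightarrow> (\<exists>T. terminal C T) \<and>
     (\<forall>f g. f \<in> Arr C \<and> g \<in> Arr C \<and> Cod C f = Cod C g \<longrightarrow> (\<exists>P p q. is_pullback C f g P p q))"

definition finitely_cocomplete :: "('o,'a) cat \<Rightarrow> bool" where
  "finitely_cocomplete C \<longleftrightarrow> (\<exists>I. initial C I) \<and>
     (\<forall>f g. f \<in> Arr C \<and> g \<in> Arr C \<and> Dom C f = Dom C g \<longrightarrow> (\<exists>P p q. is_pushout C f g P p q))"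

definition is_coequalizer :: "('o,'a) cat \<Rightarrow> 'a \<Rightarrow> 'a \<Rightarrow> 'a \<Rightarrow> bool" where
  "is_coequalizer C f g e \<longleftrightarrow>
     f \<in> Arr C \<and> g \<in> Arr C \<and> Dom C f = Dom C g \<and> Cod C f = Cod C g \<and>
     e \<in> Arr C \<and> Dom C e = Cod C f \<and> Comp C e f = Comp C e g \<and>
     (\<forall>u. u \<in> Arr C \<and> Dom C u = Cod C f \<and> Comp C u f = Comp C u g \<longrightarrow>
        (\<exists>!h. h \<in> hom C (Cod C e) (Cod C u) \<and> Comp C h e = u))"

definition regular_epi :: "('o,'a) cat \<Rightarrow> 'a \<Rightarrow> bool" where
  "regular_epi C e \<longleftrightarrow> (\<exists>f g. is_coequalizer C f g e)"

definition regular_category :: "('o,'a) cat \<Rightarrow> bool" where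
  "regular_category C \<longleftrightarrow> category C \<and> finitely_complete C \<and>
     (\<forall>f P p q. is_pullback C f f P p q \<longrightarrow> (\<exists>e. is_coequalizer C p q e)) \<and>
     (\<forall>e g P p q. regular_epi C e \<and> is_pullback C e g P p q \<longrightarrow> regular_epi C q)"

definition is_kernel :: "('o,'a) cat \<Rightarrow> 'a \<Rightarrow> 'a \<Rightarrow> bool" where
  "is_kernel C k f \<longleftrightarrow> f \<in> Arr C \<and> k \<in> Arr C \<and> Cod C k = Dom C f \<and> zero_mor C (Comp C f k) \<and>
     (\<forall>u. u \<in> Arr C \<and> Cod C u = Dom C f \<and> zero_mor C (Comp C f u) \<longrightarrow>
        (\<exists>!h. h \<in> hom C (Dom C u) (Dom C k) \<and> Comp C k h = u))"

definition is_cokernel :: "('o,'a) cat \<Rightarrow> 'a \<Rightarrow> 'a \<Rightarrow> bool" where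
  "is_cokernel C q f \<longleftrightarrow> f \<in> Arr C \<and> q \<in> Arr C \<and> Dom C q = Cod C f \<and> zero_mor C (Comp C q f) \<and>
     (\<forall>u. u \<in> Arr C \<and> Dom C u = Cod C f \<and> zero_mor C (Comp C u f) \<longrightarrow>
        (\<exists>!h. h \<in> hom C (Cod C q) (Cod C u) \<and> Comp C h q = u))"

definition normal_mono :: "('o,'a) cat \<Rightarrow> 'a \<Rightarrow> bool" where
  "normal_mono C m \<longleftrightarrow> (\<exists>f. is_kernel C m f)"

definition split_short_five :: "('o,'a) cat \<Rightarrow> bool" where
  "split_short_five C \<longleftrightarrow>
     (\<forall>p s k p' s' k' f u v.
        is_kernel C k p \<and> s \<in> hom C (Cod C p) (Dom C p) \<and> Comp C p s = Id C (Cod C p) \<and>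
        is_kernel C k' p' \<and> s' \<in> hom C (Cod C p') (Dom C p') \<and> Comp C p' s' = Id C (Cod C p') \<and>
        f \<in> hom C (Dom C p) (Dom C p') \<and> u \<in> hom C (Dom C k) (Dom C k') \<and>
        v \<in> hom C (Cod C p) (Cod C p') \<and>
        Comp C k' u = Comp C f k \<and> Comp C p' f = Comp C v p \<and> Comp C f s = Comp C s' v \<and>
        iso C u \<and> iso C v \<longrightarrow> iso C f)"

definition homological :: "('o,'a) cat \<Rightarrow> bool" where
  "homological C \<longleftrightarrow> regular_category C \<and> pointed C \<and> split_short_five C"

text \<open>(regular epi, mono) factorisation: f = m o e; m is (a representative of) the image of f.\<close>
definition image_fact :: "('o,'a) cat \<Rightarrow> 'a \<Rightarrow> 'a \<Rightarrow> 'a \<Rightarrow> bool" where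
  "image_fact C f e m \<longleftrightarrow> f \<in> Arr C \<and> regular_epi C e \<and> mono C m \<and>
     Dom C e = Dom C f \<and> Cod C e = Dom C m \<and> Cod C m = Cod C f \<and> f = Comp C m e"

definition is_coproduct2 :: "('o,'a) cat \<Rightarrow> 'o \<Rightarrow> 'o \<Rightarrow> 'o \<Rightarrow> 'a \<Rightarrow> 'a \<Rightarrow> bool" where
  "is_coproduct2 C A B S i1 i2 \<longleftrightarrow> i1 \<in> hom C A S \<and> i2 \<in> hom C B S \<and>
     (\<forall>W f g. f \<in> hom C A W \<and> g \<in> hom C B W \<longrightarrow>
        (\<exists>!h. h \<in> hom C S W \<and> Comp C h i1 = f \<and> Comp C h i2 = g))"

definition is_coproduct3 :: "('o,'a) cat \<Rightarrow> 'o \<Rightarrow> 'o \<Rightarrow> 'o \<Rightarrow> 'o \<Rightarrow> 'a \<Rightarrow> 'a \<Rightarrow> 'a \<Rightarrow> bool" where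
  "is_coproduct3 C A B D S i1 i2 i3 \<longleftrightarrow> i1 \<in> hom C A S \<and> i2 \<in> hom C B S \<and> i3 \<in> hom C D S \<and>
     (\<forall>W f g k. f \<in> hom C A W \<and> g \<in> hom C B W \<and> k \<in> hom C D W \<longrightarrow>
        (\<exists>!h. h \<in> hom C S W \<and> Comp C h i1 = f \<and> Comp C h i2 = g \<and> Comp C h i3 = k))"

text \<open>Limit of the zigzag  A --qx--> Q <--qx-- A --qy--> R <--qy-- A  (the object A_3).\<close>
definition is_zigzag_limit :: "('o,'a) cat \<Rightarrow> 'a \<Rightarrow> 'a \<Rightarrow> 'o \<Rightarrow> 'a \<Rightarrow> 'a \<Rightarrow> 'a \<Rightarrow> bool" where
  "is_zigzag_limit C qx qy L l1 l2 l3 \<longleftrightarrow>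
     qx \<in> Arr C \<and> qy \<in> Arr C \<and> Dom C qx = Dom C qy \<and>
     l1 \<in> hom C L (Dom C qx) \<and> l2 \<in> hom C L (Dom C qx) \<and> l3 \<in> hom C L (Dom C qx) \<and>
     Comp C qx l1 = Comp C qx l2 \<and> Comp C qy l2 = Comp C qy l3 \<and>
     (\<forall>W u1 u2 u3. u1 \<in> hom C W (Dom C qx) \<and> u2 \<in> hom C W (Dom C qx) \<and> u3 \<in> hom C W (Dom C qx) \<and>
        Comp C qx u1 = Comp C qx u2 \<and> Comp C qy u2 = Comp C qy u3 \<longrightarrow>
        (\<exists>!h. h \<in> hom C W L \<and> Comp C l1 h = u1 \<and> Comp C l2 h = u2 \<and> Comp C l3 h = u3))"

end

theory Submission
  imports Defs
begin

locale hcat =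
  fixes C :: "('o,'a) cat"
  assumes homological: "homological C"
begin

abbreviation cmp (infixr "\<cdot>" 55) where "g \<cdot> f \<equiv> Comp C g f"
abbreviation arr where "arr f \<equiv> f \<in> Arr C"

lemma cat: "category C" using homological by (simp add: homological_def regular_category_def)

lemma arr_dom[simp]: "arr f \<Longrightarrow> Dom C f \<in> Obj C" using cat by (simp add: category_def)
lemma arr_cod[simp]: "arr f \<Longrightarrow> Cod C f \<in> Obj C" using cat by (simp add: category_def)
lemma comp_arr[simp]: "arr f \<Longrightarrow> arr g \<Longrightarrow> Cod C f = Dom C g \<Longrightarrow> arr (g \<cdot> f)"
  using cat unfolding category_def hom_def by blast
lemma dom_comp[simp]: "arr f \<Longrightarrow> arr g \<Longrightarrow> Cod C f = Dom C g \<Longrightarrow> Dom C (g \<cdot> f) = Dom C f"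
  using cat unfolding category_def hom_def by blast
lemma cod_comp[simp]: "arr f \<Longrightarrow> arr g \<Longrightarrow> Cod C f = Dom C g \<Longrightarrow> Cod C (g \<cdot> f) = Cod C g"
  using cat unfolding category_def hom_def by blast
lemma assoc: "arr f \<Longrightarrow> arr g \<Longrightarrow> arr h \<Longrightarrow> Cod C f = Dom C g \<Longrightarrow> Cod C g = Dom C h \<Longrightarrow>
   (h \<cdot> g) \<cdot> f = h \<cdot> (g \<cdot> f)"
  using cat unfolding category_def by metis
lemma id_arr[simp]: "X \<in> Obj C \<Longrightarrow> arr (Id C X)" using cat unfolding category_def hom_def by blast
lemma id_dom[simp]: "X \<in> Obj C \<Longrightarrow> Dom C (Id C X) = X" using cat unfolding category_def hom_def by blast
lemma id_cod[simp]: "X \<in> Obj C \<Longrightarrow> Cod C (Id C X) = X" using cat unfolding category_def hom_def by blast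
lemma id_left[simp]: "arr f \<Longrightarrow> Cod C f = X \<Longrightarrow> Id C X \<cdot> f = f" using cat unfolding category_def by blast
lemma id_right[simp]: "arr f \<Longrightarrow> Dom C f = X \<Longrightarrow> f \<cdot> Id C X = f" using cat unfolding category_def by blast

lemma hom_iff: "f \<in> hom C X Y \<longleftrightarrow> arr f \<and> Dom C f = X \<and> Cod C f = Y" by (simp add: hom_def)
lemma homD: "f \<in> hom C X Y \<Longrightarrow> arr f \<and> Dom C f = X \<and> Cod C f = Y \<and> X \<in> Obj C \<and> Y \<in> Obj C"
  by (metis arr_cod arr_dom hom_iff)

lemma comp_cong_right: "a = b \<Longrightarrow> g \<cdot> a = g \<cdot> b" by simp

section \<open>zero\<close>

lemma pointed: "pointed C" using homological by (simp add: homological_def)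

definition zr :: "'o \<Rightarrow> 'o \<Rightarrow> 'a" where
  "zr X Y = (SOME f. f \<in> hom C X Y \<and> zero_mor C f)"

lemma zero_obj_Obj: "zero_obj C Z \<Longrightarrow> Z \<in> Obj C"
  unfolding zero_obj_def initial_def by blast

lemma zero_init: "zero_obj C Z \<Longrightarrow> Y \<in> Obj C \<Longrightarrow> \<exists>f. f \<in> hom C Z Y"
  unfolding zero_obj_def initial_def by (meson ex1_implies_ex)
lemma zero_term: "zero_obj C Z \<Longrightarrow> Y \<in> Obj C \<Longrightarrow> \<exists>f. f \<in> hom C Y Z"
  unfolding zero_obj_def terminal_def by (meson ex1_implies_ex)

lemma zr_exists: assumes "X \<in> Obj C" "Y \<in> Obj C" shows "\<exists>f. f \<in> hom C X Y \<and> zero_mor C f"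
proof -
  obtain Z where Z: "zero_obj C Z" using pointed unfolding pointed_def by blast
  obtain u where u: "u \<in> hom C X Z" using Z assms zero_term by blast
  obtain v where v: "v \<in> hom C Z Y" using Z assms zero_init by blast
  have "v \<cdot> u \<in> hom C X Y" using u v by (simp add: hom_iff)
  moreover have "zero_mor C (v \<cdot> u)" unfolding zero_mor_def
    using u v Z calculation
    by (intro conjI exI[of _ Z] exI[of _ u] exI[of _ v]) (simp_all add: hom_iff)
  ultimately show ?thesis by blast
qed

lemma zr: assumes "X \<in> Obj C" "Y \<in> Obj C" shows "zr X Y \<in> hom C X Y" "zero_mor C (zr X Y)"
  using someI_ex[OF zr_exists[OF assms]] unfolding zr_def by auto

lemma zr_arr[simp]: "X \<in> Obj C \<Longrightarrow> Y \<in> Obj C \<Longrightarrow> arr (zr X Y)" using zr by (simp add: hom_iff)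
lemma zr_dom[simp]: "X \<in> Obj C \<Longrightarrow> Y \<in> Obj C \<Longrightarrow> Dom C (zr X Y) = X" using zr by (simp add: hom_iff)
lemma zr_cod[simp]: "X \<in> Obj C \<Longrightarrow> Y \<in> Obj C \<Longrightarrow> Cod C (zr X Y) = Y" using zr by (simp add: hom_iff)

lemma initial_unique: assumes "initial C I" "f \<in> hom C I Y" "g \<in> hom C I Y" shows "f = g"
proof -
  have "Y \<in> Obj C" using assms(2) homD by blast
  then have "\<exists>!f. f \<in> hom C I Y" using assms(1) unfolding initial_def by blast
  thus ?thesis using assms by blast
qed
lemma terminal_unique: assumes "terminal C T" "f \<in> hom C Y T" "g \<in> hom C Y T" shows "f = g"
proof -
  have "Y \<in> Obj C" using assms(2) homD by blast
  then have "\<exists>!f. f \<in> hom C Y T" using assms(1) unfolding terminal_def by blast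
  thus ?thesis using assms by blast
qed

lemma zero_unique: assumes "zero_mor C f" "zero_mor C f'" "Dom C f = Dom C f'" "Cod C f = Cod C f'"
  shows "f = f'"
proof -
  obtain Z u v where Z: "zero_obj C Z" "u \<in> hom C (Dom C f) Z" "v \<in> hom C Z (Cod C f)" "f = v \<cdot> u"
    using assms(1) unfolding zero_mor_def by auto
  obtain Z' u' v' where Z': "zero_obj C Z'" "u' \<in> hom C (Dom C f) Z'" "v' \<in> hom C Z' (Cod C f)" "f' = v' \<cdot> u'"
    using assms(2,3,4) unfolding zero_mor_def by auto
  have oZ: "Z \<in> Obj C" "Z' \<in> Obj C" using Z(1) Z'(1) zero_obj_Obj by auto
  obtain w where w: "w \<in> hom C Z Z'" using Z(1) oZ zero_init by blast
  have iZ: "initial C Z" using Z(1) by (simp add: zero_obj_def)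
  have tZ: "terminal C Z'" using Z'(1) by (simp add: zero_obj_def)
  have a1: "v' \<cdot> w \<in> hom C Z (Cod C f)" using w Z'(3) by (simp add: hom_iff)
  have 1: "v' \<cdot> w = v" by (rule initial_unique[OF iZ a1 Z(3)])
  have a2: "w \<cdot> u \<in> hom C (Dom C f) Z'" using w Z(2) by (simp add: hom_iff)
  have 2: "w \<cdot> u = u'" by (rule terminal_unique[OF tZ a2 Z'(2)])
  have "f' = v' \<cdot> (w \<cdot> u)" using 2 Z'(4) by simp
  also have "\<dots> = (v' \<cdot> w) \<cdot> u" using Z(2,3) Z'(2,3) w by (simp add: hom_iff assoc)
  finally have "f' = v \<cdot> u" by (simp only: 1)
  thus ?thesis using Z(4) by (simp only:)
qed

lemma zero_mor_iff: "zero_mor C f \<longleftrightarrow> arr f \<and> f = zr (Dom C f) (Cod C f)"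
proof
  assume a: "zero_mor C f"
  hence "arr f" by (simp add: zero_mor_def)
  moreover have "f = zr (Dom C f) (Cod C f)"
    by (rule zero_unique[OF a zr(2)]) (use \<open>arr f\<close> in auto)
  ultimately show "arr f \<and> f = zr (Dom C f) (Cod C f)" by simp
next
  assume "arr f \<and> f = zr (Dom C f) (Cod C f)"
  thus "zero_mor C f" using zr by (metis arr_cod arr_dom)
qed

lemma zr_left[simp]: "arr g \<Longrightarrow> Dom C g = Y \<Longrightarrow> X \<in> Obj C \<Longrightarrow> g \<cdot> zr X Y = zr X (Cod C g)"
proof -
  assume a: "arr g" "Dom C g = Y" "X \<in> Obj C"
  have Y: "Y \<in> Obj C" using a arr_dom by blast
  obtain Z u v where Z: "zero_obj C Z" "u \<in> hom C X Z" "v \<in> hom C Z Y" "zr X Y = v \<cdot> u"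
    using zr(2)[of X Y] a unfolding zero_mor_def by auto
  have "zero_mor C (g \<cdot> zr X Y)" unfolding zero_mor_def
    apply (rule conjI) using a Y apply simp
    apply (rule exI[of _ Z], rule exI[of _ u], rule exI[of _ "g \<cdot> v"]) using Z a Y zr[of X Y] zr[of Y W] by (auto simp: hom_iff assoc)
  thus ?thesis using a Y by (simp add: zero_mor_iff)
qed

lemma zr_right[simp]: "arr f \<Longrightarrow> Cod C f = Y \<Longrightarrow> W \<in> Obj C \<Longrightarrow> zr Y W \<cdot> f = zr (Dom C f) W"
proof -
  assume a: "arr f" "Cod C f = Y" "W \<in> Obj C"
  have Y: "Y \<in> Obj C" using a arr_cod by blast
  obtain Z u v where Z: "zero_obj C Z" "u \<in> hom C Y Z" "v \<in> hom C Z W" "zr Y W = v \<cdot> u"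
    using zr(2)[of Y W] a unfolding zero_mor_def by auto
  have "zero_mor C (zr Y W \<cdot> f)" unfolding zero_mor_def
    apply (rule conjI) using a Y apply simp
    apply (rule exI[of _ Z], rule exI[of _ "u \<cdot> f"], rule exI[of _ v]) using Z a Y zr[of X Y] zr[of Y W] by (auto simp: hom_iff assoc)
  thus ?thesis using a Y by (simp add: zero_mor_iff)
qed


lemma comp_hom[intro]: "f \<in> hom C X Y \<Longrightarrow> g \<in> hom C Y Z \<Longrightarrow> g \<cdot> f \<in> hom C X Z"
  by (simp add: hom_iff)
lemma assoc_hom: "f \<in> hom C W X \<Longrightarrow> g \<in> hom C X Y \<Longrightarrow> h \<in> hom C Y Z \<Longrightarrow>
   (h \<cdot> g) \<cdot> f = h \<cdot> (g \<cdot> f)"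
  by (simp add: hom_iff assoc)
lemma id_hom[intro]: "X \<in> Obj C \<Longrightarrow> Id C X \<in> hom C X X" by (simp add: hom_iff)
lemma idl: "f \<in> hom C X Y \<Longrightarrow> Id C Y \<cdot> f = f" by (simp add: hom_iff)
lemma idr: "f \<in> hom C X Y \<Longrightarrow> f \<cdot> Id C X = f" by (simp add: hom_iff)
lemma zr_hom[intro]: "X \<in> Obj C \<Longrightarrow> Y \<in> Obj C \<Longrightarrow> zr X Y \<in> hom C X Y" using zr by blast
lemma zrl: "g \<in> hom C Y W \<Longrightarrow> X \<in> Obj C \<Longrightarrow> g \<cdot> zr X Y = zr X W" by (simp add: hom_iff)
lemma zrr: "f \<in> hom C X Y \<Longrightarrow> W \<in> Obj C \<Longrightarrow> zr Y W \<cdot> f = zr X W" by (simp add: hom_iff)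
lemma zero_morI: "f \<in> hom C X Y \<Longrightarrow> f = zr X Y \<Longrightarrow> zero_mor C f"
  by (simp add: hom_iff zero_mor_iff)
lemma zero_morD: "zero_mor C f \<Longrightarrow> f \<in> hom C X Y \<Longrightarrow> f = zr X Y"
  by (simp add: hom_iff zero_mor_iff)
lemma zr_zero[intro]: "X \<in> Obj C \<Longrightarrow> Y \<in> Obj C \<Longrightarrow> zero_mor C (zr X Y)" using zr by blast

lemma ass: "a \<cdot> b = c \<Longrightarrow> f \<in> hom C W X \<Longrightarrow> b \<in> hom C X Y \<Longrightarrow> a \<in> hom C Y Z \<Longrightarrow> a \<cdot> (b \<cdot> f) = c \<cdot> f"
  using assoc_hom by metis

lemma pbD: "is_pullback C f g P p q \<Longrightarrow> p \<in> hom C P (Dom C f) \<and> q \<in> hom C P (Dom C g) \<and> f \<cdot> p = g \<cdot> q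
   \<and> f \<in> hom C (Dom C f) (Cod C f) \<and> g \<in> hom C (Dom C g) (Cod C f)"
  unfolding is_pullback_def by (simp add: hom_iff)
lemma pb_ex: assumes "is_pullback C f g P p q" "u \<in> hom C W (Dom C f)" "v \<in> hom C W (Dom C g)" "f \<cdot> u = g \<cdot> v"
  obtains h where "h \<in> hom C W P" "p \<cdot> h = u" "q \<cdot> h = v"
  using assms unfolding is_pullback_def by metis
lemma pb_uniq: assumes pb: "is_pullback C f g P p q" and h: "h \<in> hom C W P" "h' \<in> hom C W P"
  and e: "p \<cdot> h = p \<cdot> h'" "q \<cdot> h = q \<cdot> h'" shows "h = h'"
proof -
  have D: "p \<in> hom C P (Dom C f)" "q \<in> hom C P (Dom C g)" "f \<cdot> p = g \<cdot> q"
    "f \<in> hom C (Dom C f) (Cod C f)" "g \<in> hom C (Dom C g) (Cod C f)" using pbD[OF pb] by auto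
  have u: "p \<cdot> h \<in> hom C W (Dom C f)" "q \<cdot> h \<in> hom C W (Dom C g)" using D h by auto
  have "f \<cdot> (p \<cdot> h) = g \<cdot> (q \<cdot> h)" using ass[OF D(3) h(1) D(1) D(4)] D h assoc_hom by metis
  hence "\<exists>!k. k \<in> hom C W P \<and> p \<cdot> k = p \<cdot> h \<and> q \<cdot> k = q \<cdot> h"
    using pb u unfolding is_pullback_def by blast
  thus ?thesis using h e by metis
qed

subsection \<open>kernels, cokernels, coequalizers\<close>

lemma kerD: "is_kernel C k f \<Longrightarrow> k \<in> hom C (Dom C k) (Dom C f) \<and> f \<in> hom C (Dom C f) (Cod C f)
   \<and> f \<cdot> k = zr (Dom C k) (Cod C f)"
proof -
  assume "is_kernel C k f"
  hence a: "arr f" "arr k" "Cod C k = Dom C f" "zero_mor C (f \<cdot> k)" unfolding is_kernel_def by auto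
  hence "f \<cdot> k = zr (Dom C (f \<cdot> k)) (Cod C (f \<cdot> k))" by (simp only: zero_mor_iff)
  thus ?thesis using a by (simp add: hom_iff)
qed
lemma ker_ex: assumes "is_kernel C k f" "u \<in> hom C W (Dom C f)" "f \<cdot> u = zr W (Cod C f)"
  obtains h where "h \<in> hom C W (Dom C k)" "k \<cdot> h = u"
proof -
  have "zero_mor C (f \<cdot> u)" using assms kerD[OF assms(1)] by (metis comp_hom homD zero_morI)
  thus ?thesis using assms that unfolding is_kernel_def by (metis homD)
qed
lemma ker_mono: assumes "is_kernel C k f" "a \<in> hom C W (Dom C k)" "b \<in> hom C W (Dom C k)" "k \<cdot> a = k \<cdot> b"
  shows "a = b"
proof -
  have K: "k \<in> hom C (Dom C k) (Dom C f)" "f \<in> hom C (Dom C f) (Cod C f)" "f \<cdot> k = zr (Dom C k) (Cod C f)"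
    using kerD[OF assms(1)] by auto
  have ka: "k \<cdot> a \<in> hom C W (Dom C f)" using K assms by auto
  have "f \<cdot> (k \<cdot> a) = zr W (Cod C f)" using ass[OF K(3) assms(2) K(1) K(2)] zrr assms(2) homD K(2) by metis
  hence "zero_mor C (f \<cdot> (k \<cdot> a))" using ka K(2) by (metis comp_hom homD zero_morI)
  hence "\<exists>!h. h \<in> hom C W (Dom C k) \<and> k \<cdot> h = k \<cdot> a"
    using assms(1) ka unfolding is_kernel_def by (metis homD)
  thus ?thesis using assms by metis
qed

lemma cokD: "is_cokernel C q f \<Longrightarrow> q \<in> hom C (Cod C f) (Cod C q) \<and> f \<in> hom C (Dom C f) (Cod C f)
   \<and> q \<cdot> f = zr (Dom C f) (Cod C q)"
proof -
  assume "is_cokernel C q f"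
  hence a: "arr f" "arr q" "Dom C q = Cod C f" "zero_mor C (q \<cdot> f)" unfolding is_cokernel_def by auto
  hence "q \<cdot> f = zr (Dom C (q \<cdot> f)) (Cod C (q \<cdot> f))" by (simp only: zero_mor_iff)
  thus ?thesis using a by (simp add: hom_iff)
qed
lemma cok_ex: assumes "is_cokernel C q f" "u \<in> hom C (Cod C f) W" "u \<cdot> f = zr (Dom C f) W"
  obtains h where "h \<in> hom C (Cod C q) W" "h \<cdot> q = u"
proof -
  have "zero_mor C (u \<cdot> f)" using assms cokD[OF assms(1)] by (metis comp_hom homD zero_morI)
  thus ?thesis using assms that unfolding is_cokernel_def by (metis homD)
qed

lemma coeqD: "is_coequalizer C f g e \<Longrightarrow> e \<in> hom C (Cod C f) (Cod C e) \<and> f \<in> hom C (Dom C f) (Cod C f)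
   \<and> g \<in> hom C (Dom C f) (Cod C f) \<and> e \<cdot> f = e \<cdot> g"
  unfolding is_coequalizer_def by (simp add: hom_iff)
lemma coeq_ex: assumes "is_coequalizer C f g e" "u \<in> hom C (Cod C f) W" "u \<cdot> f = u \<cdot> g"
  obtains h where "h \<in> hom C (Cod C e) W" "h \<cdot> e = u"
  using assms unfolding is_coequalizer_def by (metis homD)
lemma coeq_epi: assumes "is_coequalizer C f g e" "a \<in> hom C (Cod C e) W" "b \<in> hom C (Cod C e) W" "a \<cdot> e = b \<cdot> e"
  shows "a = b"
proof -
  have D: "e \<in> hom C (Cod C f) (Cod C e)" "f \<in> hom C (Dom C f) (Cod C f)"
   "g \<in> hom C (Dom C f) (Cod C f)" "e \<cdot> f = e \<cdot> g" using coeqD[OF assms(1)] by auto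
  have u: "a \<cdot> e \<in> hom C (Cod C f) W" using D assms by auto
  have "(a \<cdot> e) \<cdot> f = (a \<cdot> e) \<cdot> g" using D assms assoc_hom by metis
  hence "\<exists>!h. h \<in> hom C (Cod C e) (Cod C (a \<cdot> e)) \<and> h \<cdot> e = a \<cdot> e"
    using assms(1) u unfolding is_coequalizer_def by (metis homD)
  thus ?thesis using assms u homD by metis
qed

definition epi where "epi e \<longleftrightarrow> arr e \<and> (\<forall>a b W. a \<in> hom C (Cod C e) W \<and> b \<in> hom C (Cod C e) W \<and> a \<cdot> e = b \<cdot> e \<longrightarrow> a = b)"
lemma reg_epi: "regular_epi C e \<Longrightarrow> epi e"
  unfolding regular_epi_def epi_def using coeq_epi coeqD homD by meson
lemma epiD: "epi e \<Longrightarrow> a \<in> hom C (Cod C e) W \<Longrightarrow> b \<in> hom C (Cod C e) W \<Longrightarrow> a \<cdot> e = b \<cdot> e \<Longrightarrow> a = b"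
  unfolding epi_def by blast
lemma monoD: "mono C m \<Longrightarrow> a \<in> hom C W (Dom C m) \<Longrightarrow> b \<in> hom C W (Dom C m) \<Longrightarrow> m \<cdot> a = m \<cdot> b \<Longrightarrow> a = b"
  unfolding mono_def by (metis homD)




lemma fc: "finitely_complete C" using homological by (simp add: homological_def regular_category_def)
lemma pb_exists: assumes "f \<in> hom C X Z" "g \<in> hom C Y Z" obtains P p q where "is_pullback C f g P p q"
  using fc assms unfolding finitely_complete_def by (metis homD)

lemma monoI: assumes "arr m" "\<And>W a b. a \<in> hom C W (Dom C m) \<Longrightarrow> b \<in> hom C W (Dom C m) \<Longrightarrow> m \<cdot> a = m \<cdot> b \<Longrightarrow> a = b"
  shows "mono C m"
  unfolding mono_def using assms by (metis hom_iff)

lemma iso_id: "X \<in> Obj C \<Longrightarrow> iso C (Id C X)"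
  unfolding iso_def using idl[of "Id C X" X X] by (auto simp: hom_iff)

lemma isoD: assumes "iso C f" "f \<in> hom C X Y" obtains g where "g \<in> hom C Y X" "g \<cdot> f = Id C X" "f \<cdot> g = Id C Y"
  using assms unfolding iso_def by (metis homD)

lemma zero_objD: assumes "zero_obj C Z" shows "initial C Z" "terminal C Z" "Z \<in> Obj C"
  using assms zero_obj_Obj[OF assms] by (auto simp: zero_obj_def)

lemma obtain_zero: obtains Z where "zero_obj C Z" "Z \<in> Obj C"
proof -
  obtain Z where "zero_obj C Z" using pointed unfolding pointed_def by blast
  thus ?thesis using that zero_obj_Obj by blast
qed

lemma term_zr: assumes "zero_obj C Z" "a \<in> hom C W Z" shows "a = zr W Z"
proof -
  have "W \<in> Obj C" using assms(2) homD by blast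
  hence "zr W Z \<in> hom C W Z" using zr_hom zero_objD(3)[OF assms(1)] by blast
  thus ?thesis using terminal_unique[OF zero_objD(2)[OF assms(1)] assms(2)] by blast
qed

lemma init_zr: assumes "zero_obj C Z" "a \<in> hom C Z W" shows "a = zr Z W"
proof -
  have "W \<in> Obj C" using assms(2) homD by blast
  hence "zr Z W \<in> hom C Z W" using zr_hom zero_objD(3)[OF assms(1)] by blast
  thus ?thesis using initial_unique[OF zero_objD(1)[OF assms(1)] assms(2)] by blast
qed

lemma equalizer: assumes f: "f \<in> hom C B D" and f': "f' \<in> hom C B D"
  obtains E e where "e \<in> hom C E B" "mono C e" "f \<cdot> e = f' \<cdot> e"
    "\<And>W u. u \<in> hom C W B \<Longrightarrow> f \<cdot> u = f' \<cdot> u \<Longrightarrow> \<exists>w. w \<in> hom C W E \<and> e \<cdot> w = u"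
proof -
  obtain T where T: "terminal C T" using fc unfolding finitely_complete_def by blast
  have oB: "B \<in> Obj C" and oD: "D \<in> Obj C" using f by (auto dest!: homD simp: hom_iff)
  obtain tB where tB: "tB \<in> hom C B T" using T oB unfolding terminal_def by blast
  obtain tD where tD: "tD \<in> hom C D T" using T oD unfolding terminal_def by blast
  obtain P pr1 pr2 where PB: "is_pullback C tB tD P pr1 pr2" using pb_exists[OF tB tD] by blast
  have pr: "pr1 \<in> hom C P B" "pr2 \<in> hom C P D" using pbD[OF PB] tB tD by (auto dest!: homD simp: hom_iff)
  have "tB \<cdot> Id C B = tD \<cdot> f" using T tB tD f terminal_unique by (metis comp_hom id_hom oB)
  then obtain a where a: "a \<in> hom C B P" "pr1 \<cdot> a = Id C B" "pr2 \<cdot> a = f"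
    using pb_ex[OF PB] tB tD f oB homD id_hom by metis
  have "tB \<cdot> Id C B = tD \<cdot> f'" using T tB tD f' terminal_unique by (metis comp_hom id_hom oB)
  then obtain a' where a': "a' \<in> hom C B P" "pr1 \<cdot> a' = Id C B" "pr2 \<cdot> a' = f'"
    using pb_ex[OF PB] tB tD f' oB homD id_hom by metis
  obtain E e1 e2 where PB2: "is_pullback C a a' E e1 e2" using pb_exists[OF a(1) a'(1)] by blast
  have e: "e1 \<in> hom C E B" "e2 \<in> hom C E B" "a \<cdot> e1 = a' \<cdot> e2" using pbD[OF PB2] a a' by (auto dest!: homD simp: hom_iff)
  have "e1 = pr1 \<cdot> (a \<cdot> e1)" using ass[OF a(2) e(1) a(1) pr(1)] idl e(1) by metis
  also have "\<dots> = pr1 \<cdot> (a' \<cdot> e2)" using e by simp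
  also have "\<dots> = e2" using ass[OF a'(2) e(2) a'(1) pr(1)] idl e(2) by metis
  finally have e12: "e1 = e2" .
  have fe: "f \<cdot> e1 = f' \<cdot> e1"
  proof -
    have "f \<cdot> e1 = pr2 \<cdot> (a \<cdot> e1)" using ass[OF a(3) e(1) a(1) pr(2)] by simp
    also have "\<dots> = pr2 \<cdot> (a' \<cdot> e2)" using e by simp
    also have "\<dots> = f' \<cdot> e2" using ass[OF a'(3) e(2) a'(1) pr(2)] by simp
    finally show ?thesis using e12 by simp
  qed
  have mono: "mono C e1"
  proof (rule monoI)
    show "arr e1" using e homD by blast
    fix W x y assume xy: "x \<in> hom C W (Dom C e1)" "y \<in> hom C W (Dom C e1)" "e1 \<cdot> x = e1 \<cdot> y"
    have "Dom C e1 = E" using e homD by blast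
    hence xy': "x \<in> hom C W E" "y \<in> hom C W E" using xy by auto
    show "x = y" by (rule pb_uniq[OF PB2 xy'(1) xy'(2)]) (use xy(3) e12 in auto)
  qed
  have univ: "\<exists>w. w \<in> hom C W E \<and> e1 \<cdot> w = u" if u: "u \<in> hom C W B" "f \<cdot> u = f' \<cdot> u" for W u
  proof -
    have au: "a \<cdot> u \<in> hom C W P" "a' \<cdot> u \<in> hom C W P" using a a' u by auto
    have "a \<cdot> u = a' \<cdot> u"
    proof (rule pb_uniq[OF PB au])
      show "pr1 \<cdot> (a \<cdot> u) = pr1 \<cdot> (a' \<cdot> u)" using ass[OF a(2) u(1) a(1) pr(1)] ass[OF a'(2) u(1) a'(1) pr(1)] by simp
      show "pr2 \<cdot> (a \<cdot> u) = pr2 \<cdot> (a' \<cdot> u)" using ass[OF a(3) u(1) a(1) pr(2)] ass[OF a'(3) u(1) a'(1) pr(2)] u(2) by simp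
    qed
    moreover have "Dom C a = B" "Dom C a' = B" using a a' by (auto dest!: homD simp: hom_iff)
    ultimately obtain w where "w \<in> hom C W E" "e1 \<cdot> w = u" using pb_ex[OF PB2, of u W u] u(1) by metis
    thus ?thesis by blast
  qed
  show ?thesis using that[OF e(1) mono fe univ] by blast
qed

section \<open>kernels exist\<close>

lemma pbE: assumes "is_pullback C f g P p q" "f \<in> hom C X Z" "g \<in> hom C Y Z"
  shows "p \<in> hom C P X" "q \<in> hom C P Y" "f \<cdot> p = g \<cdot> q"
  using pbD[OF assms(1)] assms(2,3) by (auto dest!: homD simp: hom_iff)
lemma pb_ex': assumes "is_pullback C f g P p q" "f \<in> hom C X Z" "g \<in> hom C Y Z"
  "u \<in> hom C W X" "v \<in> hom C W Y" "f \<cdot> u = g \<cdot> v"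
  obtains h where "h \<in> hom C W P" "p \<cdot> h = u" "q \<cdot> h = v"
proof -
  have "Dom C f = X" "Dom C g = Y" using assms by (auto dest!: homD simp: hom_iff)
  thus ?thesis using pb_ex[OF assms(1), of u W v] assms that by auto
qed

lemma ker_exists: assumes f: "f \<in> hom C B D" obtains k where "is_kernel C k f"
proof -
  obtain Z where Z: "zero_obj C Z" "Z \<in> Obj C" using obtain_zero by blast
  have oB: "B \<in> Obj C" and oD: "D \<in> Obj C" using f by (auto dest!: homD simp: hom_iff)
  have zZD: "zr Z D \<in> hom C Z D" using zr_hom Z oD by blast
  obtain P a b where PB: "is_pullback C f (zr Z D) P a b" using pb_exists[OF f zZD] by blast
  have ab: "a \<in> hom C P B" "b \<in> hom C P Z" "f \<cdot> a = zr Z D \<cdot> b" using pbE[OF PB f zZD] by auto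
  have fa: "f \<cdot> a = zr P D" using ab(3) zrr[OF ab(2) oD] by simp
  have "is_kernel C a f" unfolding is_kernel_def
  proof (intro conjI allI impI)
    show "arr f" "arr a" "Cod C a = Dom C f" using f ab by (auto dest!: homD simp: hom_iff)
    show "zero_mor C (f \<cdot> a)" using zero_morI[OF comp_hom[OF ab(1) f] fa] .
    fix u assume u: "arr u \<and> Cod C u = Dom C f \<and> zero_mor C (f \<cdot> u)"
    define W where "W = Dom C u"
    have u1: "u \<in> hom C W B" using u f W_def by (auto dest!: homD simp: hom_iff)
    have fu: "f \<cdot> u = zr W D" using zero_morD[OF _ comp_hom[OF u1 f]] u by blast
    have oW: "W \<in> Obj C" using u1 homD by blast
    have zW: "zr Z D \<cdot> zr W Z = zr W D" using zrr[OF zr_hom[OF oW Z(2)] oD] .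
    obtain h where h: "h \<in> hom C W P" "a \<cdot> h = u" "b \<cdot> h = zr W Z"
      using pb_ex'[OF PB f zZD u1 zr_hom[OF oW Z(2)]] fu zW by metis
    show "\<exists>!h. h \<in> hom C (Dom C u) (Dom C a) \<and> a \<cdot> h = u"
    proof (rule ex1I[of _ h])
      show "h \<in> hom C (Dom C u) (Dom C a) \<and> a \<cdot> h = u" using h ab W_def by (auto dest!: homD simp: hom_iff)
      fix h' assume h': "h' \<in> hom C (Dom C u) (Dom C a) \<and> a \<cdot> h' = u"
      hence h'': "h' \<in> hom C W P" using ab W_def by (auto dest!: homD simp: hom_iff)
      show "h' = h"
      proof (rule pb_uniq[OF PB h'' h(1)])
        show "a \<cdot> h' = a \<cdot> h" using h h' by simp
        show "b \<cdot> h' = b \<cdot> h" using term_zr[OF Z(1) comp_hom[OF h'' ab(2)]] term_zr[OF Z(1) comp_hom[OF h(1) ab(2)]] by simp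
      qed
    qed
  qed
  thus ?thesis using that by blast
qed




lemma ssf: "split_short_five C" using homological by (simp add: homological_def)

lemma J: assumes k: "is_kernel C k p" and p: "p \<in> hom C B A" and kK: "k \<in> hom C K B"
  and s: "s \<in> hom C A B" "p \<cdot> s = Id C A"
  and m: "mono C m" "m \<in> hom C E B"
  and k': "k' \<in> hom C K E" "m \<cdot> k' = k" and s': "s' \<in> hom C A E" "m \<cdot> s' = s"
  shows "iso C m"
proof -
  have oA: "A \<in> Obj C" and oK: "K \<in> Obj C" using p kK by (auto dest!: homD)
  define p' where "p' = p \<cdot> m"
  have p': "p' \<in> hom C E A" using p m p'_def by auto
  have pk: "p \<cdot> k = zr K A" using kerD[OF k] p kK by (auto dest!: homD)
  have k'ker: "is_kernel C k' p'" unfolding is_kernel_def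
  proof (intro conjI allI impI)
    show "arr p'" "arr k'" "Cod C k' = Dom C p'" using p' k' by (auto dest!: homD simp: hom_iff)
    have "p' \<cdot> k' = zr K A" using ass[OF refl k'(1) m(2) p] k'(2) pk p'_def by simp
    thus "zero_mor C (p' \<cdot> k')" using zero_morI comp_hom[OF k'(1) p'] by blast
    fix u assume u: "arr u \<and> Cod C u = Dom C p' \<and> zero_mor C (p' \<cdot> u)"
    define W where "W = Dom C u"
    have u1: "u \<in> hom C W E" using u p' W_def by (auto dest!: homD simp: hom_iff)
    have "p' \<cdot> u = zr W A" using zero_morD[OF _ comp_hom[OF u1 p']] u by blast
    hence pmu: "p \<cdot> (m \<cdot> u) = zr W A" using ass[OF refl u1 m(2) p] p'_def by simp
    have mu: "m \<cdot> u \<in> hom C W B" using u1 m by auto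
    have "Dom C p = B" "Cod C p = A" using p by (auto dest!: homD)
    then obtain h where h: "h \<in> hom C W (Dom C k)" "k \<cdot> h = m \<cdot> u" using ker_ex[OF k, of "m \<cdot> u" W] mu pmu by auto
    have DK: "Dom C k = K" using kK by (auto dest!: homD)
    have "m \<cdot> (k' \<cdot> h) = m \<cdot> u" using ass[OF k'(2), of h W] h k' m DK by auto
    hence kh: "k' \<cdot> h = u" using monoD[OF m(1)] comp_hom[OF _ k'(1)] h u1 m DK by (auto dest!: homD simp: hom_iff)
    show "\<exists>!h. h \<in> hom C (Dom C u) (Dom C k') \<and> k' \<cdot> h = u"
    proof (rule ex1I[of _ h])
      show "h \<in> hom C (Dom C u) (Dom C k') \<and> k' \<cdot> h = u" using h kh DK k' W_def by (auto dest!: homD simp: hom_iff)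
      fix h' assume h': "h' \<in> hom C (Dom C u) (Dom C k') \<and> k' \<cdot> h' = u"
      hence h'': "h' \<in> hom C W K" using k' W_def by (auto dest!: homD simp: hom_iff)
      have "k \<cdot> h' = m \<cdot> u" using ass[OF k'(2) h'' k'(1) m(2)] h' by simp
      thus "h' = h" using ker_mono[OF k, of h' W h] h h'' DK by auto
    qed
  qed
  have iK: "iso C (Id C K)" and iA: "iso C (Id C A)" using iso_id oK oA by auto
  have D: "Dom C p' = E" "Cod C p' = A" "Dom C k' = K" "Dom C p = B" "Cod C p = A" "Dom C k = K"
    using p' k' p kK by (auto dest!: homD)
  have c1: "k \<cdot> Id C K = m \<cdot> k'" using k'(2) idr[OF kK] by simp
  have c2: "p \<cdot> m = Id C A \<cdot> p'" using idl[OF p'] p'_def by simp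
  have c3: "m \<cdot> s' = s \<cdot> Id C A" using s'(2) idr[OF s(1)] by simp
  have ps': "p' \<cdot> s' = Id C A" using assoc_hom[OF s'(1) m(2) p] s'(2) s(2) p'_def by simp
  show ?thesis
  proof (rule ssf[unfolded split_short_five_def, rule_format, of k' p' s' k p s m "Id C K" "Id C A"], intro conjI)
    show "is_kernel C k' p'" "is_kernel C k p" by fact+
    show "s' \<in> hom C (Cod C p') (Dom C p')" "s \<in> hom C (Cod C p) (Dom C p)" using s s' D by simp_all
    show "p' \<cdot> s' = Id C (Cod C p')" "p \<cdot> s = Id C (Cod C p)" using ps' s D by simp_all
    show "m \<in> hom C (Dom C p') (Dom C p)" using m D by simp
    show "Id C K \<in> hom C (Dom C k') (Dom C k)" "Id C A \<in> hom C (Cod C p') (Cod C p)" using D oK oA by auto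
    show "k \<cdot> Id C K = m \<cdot> k'" "p \<cdot> m = Id C A \<cdot> p'" "m \<cdot> s' = s \<cdot> Id C A" by fact+
    show "iso C (Id C K)" "iso C (Id C A)" by fact+
  qed
qed

lemma J2: assumes k: "is_kernel C k p" and p: "p \<in> hom C B A" and kK: "k \<in> hom C K B"
  and s: "s \<in> hom C A B" "p \<cdot> s = Id C A"
  and f: "f \<in> hom C B D" "f' \<in> hom C B D" and fk: "f \<cdot> k = f' \<cdot> k" and fs: "f \<cdot> s = f' \<cdot> s"
  shows "f = f'"
proof -
  have "\<exists>e E. e \<in> hom C E B \<and> mono C e \<and> f \<cdot> e = f' \<cdot> e \<and>
    (\<forall>W u. u \<in> hom C W B \<and> f \<cdot> u = f' \<cdot> u \<longrightarrow> (\<exists>w. w \<in> hom C W E \<and> e \<cdot> w = u))"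
  proof (rule equalizer[OF f(1) f(2)])
    fix E e assume "e \<in> hom C E B" "mono C e" "f \<cdot> e = f' \<cdot> e"
      "\<And>W u. u \<in> hom C W B \<Longrightarrow> f \<cdot> u = f' \<cdot> u \<Longrightarrow> \<exists>w. w \<in> hom C W E \<and> e \<cdot> w = u"
    thus ?thesis by blast
  qed
  then obtain e E where e: "e \<in> hom C E B" "mono C e" "f \<cdot> e = f' \<cdot> e"
    "\<forall>W u. u \<in> hom C W B \<and> f \<cdot> u = f' \<cdot> u \<longrightarrow> (\<exists>w. w \<in> hom C W E \<and> e \<cdot> w = u)" by blast
  obtain k' where k': "k' \<in> hom C K E" "e \<cdot> k' = k" using e(4) kK fk by blast
  obtain s' where s': "s' \<in> hom C A E" "e \<cdot> s' = s" using e(4) s(1) fs by blast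
  have "iso C e" using J[OF k p kK s e(2) e(1) k' s'] .
  then obtain g where g: "g \<in> hom C B E" "e \<cdot> g = Id C B" using isoD[OF _ e(1)] by blast
  have "f = f \<cdot> (e \<cdot> g)" using g(2) idr[OF f(1)] by simp
  also have "\<dots> = (f \<cdot> e) \<cdot> g" using assoc_hom[OF g(1) e(1) f(1)] by simp
  also have "\<dots> = (f' \<cdot> e) \<cdot> g" using e by simp
  also have "\<dots> = f' \<cdot> (e \<cdot> g)" using assoc_hom[OF g(1) e(1) f(2)] by simp
  also have "\<dots> = f'" using g(2) idr[OF f(2)] by simp
  finally show ?thesis .
qed




lemma pb_mono: assumes pb: "is_pullback C f m N n1 n2" and f: "f \<in> hom C B D" and m: "m \<in> hom C M D" "mono C m"
  shows "mono C n1"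
proof -
  have n: "n1 \<in> hom C N B" "n2 \<in> hom C N M" "f \<cdot> n1 = m \<cdot> n2" using pbE[OF pb f m(1)] by auto
  show ?thesis
  proof (rule monoI)
    show "arr n1" using n by (auto dest!: homD)
    fix W a b assume ab: "a \<in> hom C W (Dom C n1)" "b \<in> hom C W (Dom C n1)" "n1 \<cdot> a = n1 \<cdot> b"
    have ab': "a \<in> hom C W N" "b \<in> hom C W N" using ab n by (auto dest!: homD simp: hom_iff)
    have "m \<cdot> (n2 \<cdot> a) = m \<cdot> (n2 \<cdot> b)"
      using ass[OF n(3) ab'(1) n(1) f] ass[OF n(3) ab'(2) n(1) f] ass[OF refl ab'(1) n(2) m(1)]
        ass[OF refl ab'(2) n(2) m(1)] ab(3) by metis
    hence "n2 \<cdot> a = n2 \<cdot> b" using monoD[OF m(2)] comp_hom[OF ab'(1) n(2)] comp_hom[OF ab'(2) n(2)] m(1)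
      by (auto dest!: homD simp: hom_iff)
    thus "a = b" using pb_uniq[OF pb ab'] ab(3) by blast
  qed
qed

lemma J3: assumes k: "is_kernel C k p" and p: "p \<in> hom C B A" and kK: "k \<in> hom C K B"
  and s: "s \<in> hom C A B" "p \<cdot> s = Id C A"
  and f: "f \<in> hom C B D" and m: "m \<in> hom C M D" "mono C m"
  and a: "a \<in> hom C A M" "f \<cdot> s = m \<cdot> a" and b: "b \<in> hom C K M" "f \<cdot> k = m \<cdot> b"
  obtains d where "d \<in> hom C B M" "m \<cdot> d = f"
proof -
  obtain N n1 n2 where pb: "is_pullback C f m N n1 n2" using pb_exists[OF f m(1)] by blast
  have n: "n1 \<in> hom C N B" "n2 \<in> hom C N M" "f \<cdot> n1 = m \<cdot> n2" using pbE[OF pb f m(1)] by auto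
  have mn: "mono C n1" using pb_mono[OF pb f m] .
  obtain s' where s': "s' \<in> hom C A N" "n1 \<cdot> s' = s" using pb_ex'[OF pb f m(1) s(1) a] by blast
  obtain k' where k': "k' \<in> hom C K N" "n1 \<cdot> k' = k" using pb_ex'[OF pb f m(1) kK b] by blast
  have "iso C n1" using J[OF k p kK s mn n(1) k' s'] .
  then obtain g where g: "g \<in> hom C B N" "n1 \<cdot> g = Id C B" using isoD[OF _ n(1)] by blast
  have "m \<cdot> (n2 \<cdot> g) = f \<cdot> (n1 \<cdot> g)" using ass[OF n(3) g(1) n(1) f] ass[OF refl g(1) n(2) m(1)] by simp
  also have "\<dots> = f" using g(2) idr[OF f] by simp
  finally show ?thesis using that comp_hom[OF g(1) n(2)] by blast
qed

lemma orth: assumes e: "regular_epi C e" "e \<in> hom C X Y" and m: "m \<in> hom C M D" "mono C m"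
  and a: "a \<in> hom C X M" and b: "b \<in> hom C Y D" and eq: "m \<cdot> a = b \<cdot> e"
  obtains d where "d \<in> hom C Y M" "m \<cdot> d = b"
proof -
  obtain f1 f2 where co: "is_coequalizer C f1 f2 e" using e(1) unfolding regular_epi_def by blast
  have D: "e \<in> hom C (Cod C f1) (Cod C e)" "f1 \<in> hom C (Dom C f1) (Cod C f1)"
    "f2 \<in> hom C (Dom C f1) (Cod C f1)" "e \<cdot> f1 = e \<cdot> f2" using coeqD[OF co] by auto
  have XY: "Cod C f1 = X" "Cod C e = Y" using D(1) e(2) by (auto dest!: homD)
  define Q where "Q = Dom C f1"
  have f12: "f1 \<in> hom C Q X" "f2 \<in> hom C Q X" using D XY Q_def by auto
  have "m \<cdot> (a \<cdot> f1) = (b \<cdot> e) \<cdot> f1" using ass[OF eq f12(1) a m(1)] .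
  also have "\<dots> = b \<cdot> (e \<cdot> f1)" using assoc_hom[OF f12(1) e(2) b] .
  also have "\<dots> = b \<cdot> (e \<cdot> f2)" using D(4) by simp
  also have "\<dots> = (b \<cdot> e) \<cdot> f2" using assoc_hom[OF f12(2) e(2) b] by simp
  also have "\<dots> = m \<cdot> (a \<cdot> f2)" using ass[OF eq f12(2) a m(1)] by simp
  finally have "m \<cdot> (a \<cdot> f1) = m \<cdot> (a \<cdot> f2)" .
  hence "a \<cdot> f1 = a \<cdot> f2" using monoD[OF m(2)] comp_hom[OF f12(1) a] comp_hom[OF f12(2) a] m(1)
      by (auto dest!: homD simp: hom_iff)
  then obtain d where d: "d \<in> hom C (Cod C e) M" "d \<cdot> e = a" using coeq_ex[OF co, of a M] a XY by auto
  have d': "d \<in> hom C Y M" using d XY by simp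
  have "(m \<cdot> d) \<cdot> e = b \<cdot> e" using assoc_hom[OF e(2) d' m(1)] d(2) eq by simp
  hence "m \<cdot> d = b" using coeq_epi[OF co, of "m \<cdot> d" D "b"] comp_hom[OF d' m(1)] b XY by simp
  thus ?thesis using that d' by blast
qed

lemma ZK: assumes m: "m \<in> hom C E B"
  and z: "\<And>W j. j \<in> hom C W E \<Longrightarrow> m \<cdot> j = zr W B \<Longrightarrow> j = zr W E"
  shows "mono C m"
proof (rule monoI)
  show "arr m" using m by (auto dest!: homD)
  have oE: "E \<in> Obj C" using m by (auto dest!: homD)
  obtain T s1 s2 where pb: "is_pullback C m m T s1 s2" using pb_exists[OF m m] by blast
  have s: "s1 \<in> hom C T E" "s2 \<in> hom C T E" "m \<cdot> s1 = m \<cdot> s2" using pbE[OF pb m m] by auto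
  obtain dl where dl: "dl \<in> hom C E T" "s1 \<cdot> dl = Id C E" "s2 \<cdot> dl = Id C E"
    using pb_ex'[OF pb m m id_hom[OF oE] id_hom[OF oE]] by blast
  obtain j where j: "is_kernel C j s1" using ker_exists[OF s(1)] by blast
  define K where "K = Dom C j"
  have jK: "j \<in> hom C K T" "s1 \<cdot> j = zr K E" using kerD[OF j] s(1) K_def by (auto dest!: homD simp: hom_iff)
  have oK: "K \<in> Obj C" using jK by (auto dest!: homD)
  have "m \<cdot> (s2 \<cdot> j) = m \<cdot> (s1 \<cdot> j)" using ass[OF s(3) jK(1) s(1) m] ass[OF refl jK(1) s(2) m] by simp
  also have "\<dots> = zr K B" using jK(2) zrl[OF m oK] by simp
  finally have "s2 \<cdot> j = zr K E" using z comp_hom[OF jK(1) s(2)] by blast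
  hence s12: "s1 = s2" using J2[OF j s(1) jK(1) _ _ s(1) s(2), of dl] dl jK(2) by simp
  fix W a b assume ab: "a \<in> hom C W (Dom C m)" "b \<in> hom C W (Dom C m)" "m \<cdot> a = m \<cdot> b"
  have ab': "a \<in> hom C W E" "b \<in> hom C W E" using ab m by (auto dest!: homD simp: hom_iff)
  obtain t where t: "t \<in> hom C W T" "s1 \<cdot> t = a" "s2 \<cdot> t = b" using pb_ex'[OF pb m m ab'(1) ab'(2) ab(3)] by blast
  thus "a = b" using s12 by simp
qed




lemma reg_pb: "regular_epi C e \<Longrightarrow> is_pullback C e g P p q \<Longrightarrow> regular_epi C q"
  using homological unfolding homological_def regular_category_def by blast
lemma kp_coeq: "is_pullback C f f P p q \<Longrightarrow> \<exists>e. is_coequalizer C p q e"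
  using homological unfolding homological_def regular_category_def by blast

lemma effective: assumes f: "f \<in> hom C B D"
  and cover: "\<And>M m e. m \<in> hom C M D \<Longrightarrow> mono C m \<Longrightarrow> regular_epi C e \<Longrightarrow> e \<in> hom C B M \<Longrightarrow> m \<cdot> e = f \<Longrightarrow> iso C m"
  and kf: "is_kernel C kf f" "kf \<in> hom C K B"
  and u: "u \<in> hom C B Z" "u \<cdot> kf = zr K Z"
  obtains t where "t \<in> hom C D Z" "t \<cdot> f = u"
proof -
  have oB: "B \<in> Obj C" "D \<in> Obj C" "K \<in> Obj C" "Z \<in> Obj C" using f kf u by (auto dest!: homD)
  obtain R r1 r2 where pb: "is_pullback C f f R r1 r2" using pb_exists[OF f f] by blast
  have r: "r1 \<in> hom C R B" "r2 \<in> hom C R B" "f \<cdot> r1 = f \<cdot> r2" using pbE[OF pb f f] by auto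
  obtain e where co: "is_coequalizer C r1 r2 e" using kp_coeq[OF pb] by blast
  define M where "M = Cod C e"
  have eh: "e \<in> hom C B M" using coeqD[OF co] r M_def by (auto dest!: homD simp: hom_iff)
  have re: "regular_epi C e" using co unfolding regular_epi_def by blast
  have CB: "Cod C r1 = B" using r by (auto dest!: homD)
  obtain m where m: "m \<in> hom C M D" "m \<cdot> e = f" using coeq_ex[OF co, of f D] f r(3) CB M_def by auto
  have oM: "M \<in> Obj C" using eh by (auto dest!: homD)
  have mono: "mono C m"
  proof (rule ZK[OF m(1)])
    fix W j assume j: "j \<in> hom C W M" "m \<cdot> j = zr W D"
    have oW: "W \<in> Obj C" using j by (auto dest!: homD)
    obtain W' j' e' where pb2: "is_pullback C e j W' j' e'" using pb_exists[OF eh j(1)] by blast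
    have jj: "j' \<in> hom C W' B" "e' \<in> hom C W' W" "e \<cdot> j' = j \<cdot> e'" using pbE[OF pb2 eh j(1)] by auto
    have oW': "W' \<in> Obj C" using jj by (auto dest!: homD)
    have re': "regular_epi C e'" using reg_pb[OF re pb2] .
    have "f \<cdot> j' = m \<cdot> (e \<cdot> j')" using ass[OF m(2) jj(1) eh m(1)] by simp
    also have "\<dots> = (m \<cdot> j) \<cdot> e'" using jj(3) assoc_hom[OF jj(2) j(1) m(1)] by simp
    also have "\<dots> = zr W' D" using j(2) zrr[OF jj(2) oB(2)] by simp
    finally have fj: "f \<cdot> j' = f \<cdot> zr W' B" using zrl[OF f oW'] by simp
    obtain t where t: "t \<in> hom C W' R" "r1 \<cdot> t = j'" "r2 \<cdot> t = zr W' B"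
      using pb_ex'[OF pb f f jj(1) zr_hom[OF oW' oB(1)] fj] by blast
    have "e \<cdot> j' = e \<cdot> zr W' B"
      using ass[OF refl t(1) r(1) eh] ass[OF refl t(1) r(2) eh] coeqD[OF co] t by metis
    hence "j \<cdot> e' = zr W M \<cdot> e'" using jj(3) zrl[OF eh oW'] zrr[OF jj(2) oM] by simp
    moreover have "Cod C e' = W" using jj by (auto dest!: homD)
    ultimately show "j = zr W M" using epiD[OF reg_epi[OF re'], of j M "zr W M"] j(1) zr_hom[OF oW oM] by simp
  qed
  have "iso C m" using cover[OF m(1) mono re eh m(2)] .
  then obtain mi where mi: "mi \<in> hom C D M" "mi \<cdot> m = Id C M" using isoD[OF _ m(1)] by blast
  obtain dl where dl: "dl \<in> hom C B R" "r1 \<cdot> dl = Id C B" "r2 \<cdot> dl = Id C B"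
    using pb_ex'[OF pb f f id_hom[OF oB(1)] id_hom[OF oB(1)]] by blast
  obtain j where j: "is_kernel C j r1" using ker_exists[OF r(1)] by blast
  define J where "J = Dom C j"
  have jJ: "j \<in> hom C J R" "r1 \<cdot> j = zr J B" using kerD[OF j] r(1) J_def by (auto dest!: homD simp: hom_iff)
  have oJ: "J \<in> Obj C" using jJ by (auto dest!: homD)
  have "f \<cdot> (r2 \<cdot> j) = f \<cdot> (r1 \<cdot> j)" using ass[OF r(3) jJ(1) r(1) f] ass[OF refl jJ(1) r(2) f] by simp
  also have "\<dots> = zr J D" using jJ(2) zrl[OF f oJ] by simp
  finally obtain w where w: "w \<in> hom C J K" "kf \<cdot> w = r2 \<cdot> j"
    using ker_ex[OF kf(1), of "r2 \<cdot> j" J] comp_hom[OF jJ(1) r(2)] kf(2) f by (auto dest!: homD simp: hom_iff)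
  have ur2: "(u \<cdot> r2) \<cdot> j = zr J Z"
    using assoc_hom[OF jJ(1) r(2) u(1)] ass[OF u(2) w(1) kf(2) u(1)] w(2) zrr[OF w(1) oB(4)] by simp
  have ur1: "(u \<cdot> r1) \<cdot> j = zr J Z"
    using assoc_hom[OF jJ(1) r(1) u(1)] jJ(2) zrl[OF u(1) oJ] by simp
  have "u \<cdot> r1 = u \<cdot> r2"
  proof (rule J2[OF j r(1) jJ(1) dl(1) dl(2)])
    show "u \<cdot> r1 \<in> hom C R Z" "u \<cdot> r2 \<in> hom C R Z" using r u by auto
    show "(u \<cdot> r1) \<cdot> j = (u \<cdot> r2) \<cdot> j" using ur1 ur2 by simp
    show "(u \<cdot> r1) \<cdot> dl = (u \<cdot> r2) \<cdot> dl"
      using assoc_hom[OF dl(1) r(1) u(1)] assoc_hom[OF dl(1) r(2) u(1)] dl idr[OF u(1)] by simp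
  qed
  then obtain t0 where t0: "t0 \<in> hom C (Cod C e) Z" "t0 \<cdot> e = u" using coeq_ex[OF co, of u Z] u CB by auto
  have t0': "t0 \<in> hom C M Z" using t0 M_def by simp
  have "(t0 \<cdot> mi) \<cdot> f = t0 \<cdot> (mi \<cdot> (m \<cdot> e))" using assoc_hom[OF comp_hom[OF eh m(1)] mi(1) t0'] m(2) by simp
  also have "\<dots> = t0 \<cdot> e" using assoc_hom[OF eh m(1) mi(1)] mi(2) idl[OF eh] by simp
  finally show ?thesis using that comp_hom[OF mi(1) t0'] t0(2) by simp
qed




lemma ass': "a \<cdot> b = c \<Longrightarrow> arr a \<Longrightarrow> arr b \<Longrightarrow> Cod C b = Dom C a \<Longrightarrow> arr z \<Longrightarrow> Cod C z = Dom C b \<Longrightarrow>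
   a \<cdot> (b \<cdot> z) = c \<cdot> z"
  using assoc by metis

lemma zz_hom: assumes "is_zigzag_limit C qx qy L l1 l2 l3" "qx \<in> hom C A Q1" "qy \<in> hom C A Q2"
  shows "l1 \<in> hom C L A" "l2 \<in> hom C L A" "l3 \<in> hom C L A" "qx \<cdot> l1 = qx \<cdot> l2" "qy \<cdot> l2 = qy \<cdot> l3"
  using assms unfolding is_zigzag_limit_def by (auto dest!: homD)

lemma zz_ex: assumes z: "is_zigzag_limit C qx qy L l1 l2 l3" and q: "qx \<in> hom C A Q1" "qy \<in> hom C A Q2"
  and u: "u1 \<in> hom C W A" "u2 \<in> hom C W A" "u3 \<in> hom C W A" "qx \<cdot> u1 = qx \<cdot> u2" "qy \<cdot> u2 = qy \<cdot> u3"
  obtains t where "t \<in> hom C W L" "l1 \<cdot> t = u1" "l2 \<cdot> t = u2" "l3 \<cdot> t = u3"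
proof -
  have "Dom C qx = A" using q by (auto dest!: homD)
  thus ?thesis using z u that unfolding is_zigzag_limit_def by metis
qed

lemma zz_uniq: assumes z: "is_zigzag_limit C qx qy L l1 l2 l3" and q: "qx \<in> hom C A Q1" "qy \<in> hom C A Q2"
  and t: "t \<in> hom C W L" "t' \<in> hom C W L" and e: "l1 \<cdot> t = l1 \<cdot> t'" "l2 \<cdot> t = l2 \<cdot> t'" "l3 \<cdot> t = l3 \<cdot> t'"
  shows "t = t'"
proof -
  note l = zz_hom[OF z q]
  have u: "l1 \<cdot> t \<in> hom C W A" "l2 \<cdot> t \<in> hom C W A" "l3 \<cdot> t \<in> hom C W A" using l t by auto
  have "qx \<cdot> (l1 \<cdot> t) = qx \<cdot> (l2 \<cdot> t)" using ass[OF l(4) t(1) l(1) q(1)] ass[OF refl t(1) l(2) q(1)] by simp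
  moreover have "qy \<cdot> (l2 \<cdot> t) = qy \<cdot> (l3 \<cdot> t)" using ass[OF l(5) t(1) l(2) q(2)] ass[OF refl t(1) l(3) q(2)] by simp
  moreover have "Dom C qx = A" using q by (auto dest!: homD)
  ultimately have "\<exists>!h. h \<in> hom C W L \<and> l1 \<cdot> h = l1 \<cdot> t \<and> l2 \<cdot> h = l2 \<cdot> t \<and> l3 \<cdot> h = l3 \<cdot> t"
    using z u unfolding is_zigzag_limit_def by (metis (no_types, lifting))
  thus ?thesis using t e by metis
qed

lemma cp2_ex: assumes "is_coproduct2 C A B S i1 i2" "f \<in> hom C A W" "g \<in> hom C B W"
  obtains h where "h \<in> hom C S W" "h \<cdot> i1 = f" "h \<cdot> i2 = g"
  using assms unfolding is_coproduct2_def by metis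
lemma cp2_uniq: assumes "is_coproduct2 C A B S i1 i2" "h \<in> hom C S W" "h' \<in> hom C S W"
  "h \<cdot> i1 = h' \<cdot> i1" "h \<cdot> i2 = h' \<cdot> i2" shows "h = h'"
proof -
  have i: "i1 \<in> hom C A S" "i2 \<in> hom C B S" using assms(1) unfolding is_coproduct2_def by auto
  have "\<exists>!k. k \<in> hom C S W \<and> k \<cdot> i1 = h \<cdot> i1 \<and> k \<cdot> i2 = h \<cdot> i2"
    using assms(1) comp_hom[OF i(1) assms(2)] comp_hom[OF i(2) assms(2)] unfolding is_coproduct2_def by blast
  thus ?thesis using assms by metis
qed
lemma cp3_ex: assumes "is_coproduct3 C A B D S i1 i2 i3" "f \<in> hom C A W" "g \<in> hom C B W" "k \<in> hom C D W"
  obtains h where "h \<in> hom C S W" "h \<cdot> i1 = f" "h \<cdot> i2 = g" "h \<cdot> i3 = k"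
  using assms unfolding is_coproduct3_def by metis
lemma cp3_uniq: assumes "is_coproduct3 C A B D S i1 i2 i3" "h \<in> hom C S W" "h' \<in> hom C S W"
  "h \<cdot> i1 = h' \<cdot> i1" "h \<cdot> i2 = h' \<cdot> i2" "h \<cdot> i3 = h' \<cdot> i3" shows "h = h'"
proof -
  have i: "i1 \<in> hom C A S" "i2 \<in> hom C B S" "i3 \<in> hom C D S" using assms(1) unfolding is_coproduct3_def by auto
  have "\<exists>!k. k \<in> hom C S W \<and> k \<cdot> i1 = h \<cdot> i1 \<and> k \<cdot> i2 = h \<cdot> i2 \<and> k \<cdot> i3 = h \<cdot> i3"
    using assms(1) comp_hom[OF i(1) assms(2)] comp_hom[OF i(2) assms(2)] comp_hom[OF i(3) assms(2)]
    unfolding is_coproduct3_def by blast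
  thus ?thesis using assms by metis
qed

lemma NM: assumes x: "x \<in> hom C X A" and im: "image_fact C x ex mx" and nm: "normal_mono C mx"
  and q: "is_cokernel C qx x" "qx \<in> hom C A Q"
  shows "is_kernel C mx qx" "ex \<in> hom C X (Dom C mx)" "mx \<in> hom C (Dom C mx) A" "mx \<cdot> ex = x" "regular_epi C ex" "mono C mx"
proof -
  define X' where "X' = Dom C mx"
  have I: "regular_epi C ex" "mono C mx" "ex \<in> hom C X X'" "mx \<in> hom C X' A" "mx \<cdot> ex = x"
    using im x X'_def unfolding image_fact_def mono_def regular_epi_def by (auto dest!: homD coeqD simp: hom_iff)
  thus "ex \<in> hom C X (Dom C mx)" "mx \<in> hom C (Dom C mx) A" "mx \<cdot> ex = x" "regular_epi C ex" "mono C mx"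
    using X'_def by auto
  obtain f0 where f0: "is_kernel C mx f0" using nm unfolding normal_mono_def by blast
  define F where "F = Cod C f0"
  have f0h: "f0 \<in> hom C A F" "f0 \<cdot> mx = zr X' F" using kerD[OF f0] I(4) X'_def F_def by (auto dest!: homD simp: hom_iff)
  have oX: "X \<in> Obj C" "X' \<in> Obj C" "Q \<in> Obj C" "F \<in> Obj C" using x I f0h q by (auto dest!: homD)
  have DD: "Cod C x = A" "Dom C x = X" "Cod C qx = Q" using x q(2) by (auto dest!: homD)
  have qx0: "qx \<cdot> x = zr X Q" using cokD[OF q(1)] unfolding DD by blast
  have "(qx \<cdot> mx) \<cdot> ex = zr X' Q \<cdot> ex" using assoc_hom[OF I(3) I(4) q(2)] I(5) qx0 zrr[OF I(3) oX(3)] by simp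
  moreover have "Cod C ex = X'" using I(3) by (auto dest!: homD)
  ultimately have qm: "qx \<cdot> mx = zr X' Q" using epiD[OF reg_epi[OF I(1)], of "qx \<cdot> mx" Q "zr X' Q"]
    comp_hom[OF I(4) q(2)] zr_hom[OF oX(2) oX(3)] by simp
  have f0x: "f0 \<cdot> x = zr X F" using ass[OF f0h(2) I(3) I(4) f0h(1)] I(5) zrr[OF I(3) oX(4)] by simp
  obtain t where t: "t \<in> hom C (Cod C qx) F" "t \<cdot> qx = f0" using cok_ex[OF q(1), of f0 F] f0h(1) f0x
    unfolding DD by blast
  have t': "t \<in> hom C Q F" using t DD by simp
  show "is_kernel C mx qx" unfolding is_kernel_def
  proof (intro conjI allI impI)
    show "arr qx" "arr mx" "Cod C mx = Dom C qx" using q(2) I(4) by (auto dest!: homD simp: hom_iff)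
    show "zero_mor C (qx \<cdot> mx)" using zero_morI[OF comp_hom[OF I(4) q(2)] qm] .
    fix u assume u: "arr u \<and> Cod C u = Dom C qx \<and> zero_mor C (qx \<cdot> u)"
    define W where "W = Dom C u"
    have u1: "u \<in> hom C W A" using u q(2) W_def by (auto dest!: homD simp: hom_iff)
    have oW: "W \<in> Obj C" using u1 by (auto dest!: homD)
    have qu: "qx \<cdot> u = zr W Q" using zero_morD[OF _ comp_hom[OF u1 q(2)]] u by blast
    have "f0 \<cdot> u = zr W F" using ass[OF t(2) u1 q(2) t'] qu zrl[OF t' oW] by simp
    then obtain h where h: "h \<in> hom C W (Dom C mx)" "mx \<cdot> h = u" using ker_ex[OF f0, of u W] u1 f0h(1) oX
      by (auto dest!: homD simp: hom_iff)
    show "\<exists>!h. h \<in> hom C (Dom C u) (Dom C mx) \<and> mx \<cdot> h = u"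
    proof (rule ex1I[of _ h])
      show "h \<in> hom C (Dom C u) (Dom C mx) \<and> mx \<cdot> h = u" using h W_def by simp
      fix h' assume h': "h' \<in> hom C (Dom C u) (Dom C mx) \<and> mx \<cdot> h' = u"
      thus "h' = h" using monoD[OF I(2), of h' W h] h W_def by auto
    qed
  qed
qed




lemma main:
  fixes X Y A QX QY L KX KY S SX SY P :: 'o
    and x y qx qy l1 l2 l3 pi1 pi2 rho1 rho2 dX dY
        i1 i2 i3 a1 a2 b1 b2 rX rY q1 q2 fX fY g k h e m :: 'a
  assumes fcc: "finitely_cocomplete C"
    and x: "x \<in> hom C X A" and y: "y \<in> hom C Y A"
    and imx: "\<exists>ex mx. image_fact C x ex mx \<and> normal_mono C mx"
    and imy: "\<exists>ey my. image_fact C y ey my \<and> normal_mono C my"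
    \<comment> \<open>cokernels A \<rightarrow> A/X, A \<rightarrow> A/Y\<close>
    and qx: "is_cokernel C qx x" and QX: "Cod C qx = QX"
    and qy: "is_cokernel C qy y" and QY: "Cod C qy = QY"
    and A3: "is_zigzag_limit C qx qy L l1 l2 l3"
    and KPX: "is_pullback C qx qx KX pi1 pi2"
    and KPY: "is_pullback C qy qy KY rho1 rho2"
    and dX: "dX \<in> hom C KX L" "Comp C l1 dX = pi1" "Comp C l2 dX = pi2" "Comp C l3 dX = pi2"
    and dY: "dY \<in> hom C KY L" "Comp C l1 dY = rho1" "Comp C l2 dY = rho1" "Comp C l3 dY = rho2"
    \<comment> \<open>data for the 1-weighted commutator\<close>
    and S: "is_coproduct3 C A X Y S i1 i2 i3"
    and SX: "is_coproduct2 C A X SX a1 a2"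
    and SY: "is_coproduct2 C A Y SY b1 b2"
    and rX: "rX \<in> hom C SX A" "Comp C rX a1 = Id C A" "zero_mor C (Comp C rX a2)"
    and rY: "rY \<in> hom C SY A" "Comp C rY b1 = Id C A" "zero_mor C (Comp C rY b2)"
    and PB: "is_pullback C rX rY P q1 q2"
    and fX: "fX \<in> hom C S SX" "Comp C fX i1 = a1" "Comp C fX i2 = a2" "zero_mor C (Comp C fX i3)"
    and fY: "fY \<in> hom C S SY" "Comp C fY i1 = b1" "zero_mor C (Comp C fY i2)" "Comp C fY i3 = b2"
    and g: "g \<in> hom C S P" "Comp C q1 g = fX" "Comp C q2 g = fY"
    and k: "is_kernel C k g"
    and h: "h \<in> hom C S A" "Comp C h i1 = Id C A" "Comp C h i2 = x" "Comp C h i3 = y"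
    and im: "image_fact C (Comp C h k) e m"
  shows "((\<exists>p. p \<in> hom C L A \<and> Comp C p dX = pi1 \<and> Comp C p dY = rho2)
           \<longleftrightarrow> (\<exists>!p. p \<in> hom C L A \<and> Comp C p dX = pi1 \<and> Comp C p dY = rho2))
       \<and> ((\<exists>!p. p \<in> hom C L A \<and> Comp C p dX = pi1 \<and> Comp C p dY = rho2)
           \<longleftrightarrow> zero_obj C (Dom C m))"
proof -
  obtain ex mx where imx': "image_fact C x ex mx" "normal_mono C mx" using imx by blast
  obtain ey my where imy': "image_fact C y ey my" "normal_mono C my" using imy by blast
  define X' where "X' = Dom C mx"
  define Y' where "Y' = Dom C my"
  have DX: "Cod C x = A" "Dom C x = X" "Cod C y = A" "Dom C y = Y" using x y by (auto dest!: homD)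
  have qxh: "qx \<in> hom C A QX" "qx \<cdot> x = zr X QX" using cokD[OF qx] QX unfolding DX by auto
  have qyh: "qy \<in> hom C A QY" "qy \<cdot> y = zr Y QY" using cokD[OF qy] QY unfolding DX by auto
  note NX = NM[OF x imx'(1) imx'(2) qx qxh(1), folded X'_def]
  note NY = NM[OF y imy'(1) imy'(2) qy qyh(1), folded Y'_def]
  note ZZ = zz_hom[OF A3 qxh(1) qyh(1)]
  have kpx: "pi1 \<in> hom C KX A" "pi2 \<in> hom C KX A" "qx \<cdot> pi1 = qx \<cdot> pi2" using pbE[OF KPX qxh(1) qxh(1)] by auto
  have kpy: "rho1 \<in> hom C KY A" "rho2 \<in> hom C KY A" "qy \<cdot> rho1 = qy \<cdot> rho2" using pbE[OF KPY qyh(1) qyh(1)] by auto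
  have Sh: "i1 \<in> hom C A S" "i2 \<in> hom C X S" "i3 \<in> hom C Y S" using S unfolding is_coproduct3_def by auto
  have SXh: "a1 \<in> hom C A SX" "a2 \<in> hom C X SX" using SX unfolding is_coproduct2_def by auto
  have SYh: "b1 \<in> hom C A SY" "b2 \<in> hom C Y SY" using SY unfolding is_coproduct2_def by auto
  have rXz: "rX \<cdot> a2 = zr X A" using zero_morD[OF rX(3) comp_hom[OF SXh(2) rX(1)]] .
  have rYz: "rY \<cdot> b2 = zr Y A" using zero_morD[OF rY(3) comp_hom[OF SYh(2) rY(1)]] .
  have pbP: "q1 \<in> hom C P SX" "q2 \<in> hom C P SY" "rX \<cdot> q1 = rY \<cdot> q2" using pbE[OF PB rX(1) rY(1)] by auto
  have fXz: "fX \<cdot> i3 = zr Y SX" using zero_morD[OF fX(4) comp_hom[OF Sh(3) fX(1)]] .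
  have fYz: "fY \<cdot> i2 = zr X SY" using zero_morD[OF fY(3) comp_hom[OF Sh(2) fY(1)]] .
  define K0 where "K0 = Dom C k"
  have DG: "Dom C g = S" "Cod C g = P" using g(1) by (auto dest!: homD)
  have kh: "k \<in> hom C K0 S" "g \<cdot> k = zr K0 P" using kerD[OF k] unfolding DG K0_def by auto
  have oO: "A \<in> Obj C" "X \<in> Obj C" "Y \<in> Obj C" "QX \<in> Obj C" "QY \<in> Obj C" "L \<in> Obj C" "KX \<in> Obj C"
    "KY \<in> Obj C" "S \<in> Obj C" "SX \<in> Obj C" "SY \<in> Obj C" "P \<in> Obj C" "X' \<in> Obj C" "Y' \<in> Obj C" "K0 \<in> Obj C"
    using x y qxh qyh dX(1) dY(1) Sh SXh SYh pbP NX(2) NY(2) kh by (auto dest!: homD)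
  obtain cX where cX: "cX \<in> hom C SX A" "cX \<cdot> a1 = Id C A" "cX \<cdot> a2 = x" using cp2_ex[OF SX id_hom[OF oO(1)] x] by blast
  obtain cY where cY: "cY \<in> hom C SY A" "cY \<cdot> b1 = Id C A" "cY \<cdot> b2 = y" using cp2_ex[OF SY id_hom[OF oO(1)] y] by blast
  obtain dlX where dlX: "dlX \<in> hom C A KX" "pi1 \<cdot> dlX = Id C A" "pi2 \<cdot> dlX = Id C A"
    using pb_ex'[OF KPX qxh(1) qxh(1) id_hom[OF oO(1)] id_hom[OF oO(1)]] by blast
  obtain dlY where dlY: "dlY \<in> hom C A KY" "rho1 \<cdot> dlY = Id C A" "rho2 \<cdot> dlY = Id C A"
    using pb_ex'[OF KPY qyh(1) qyh(1) id_hom[OF oO(1)] id_hom[OF oO(1)]] by blast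
  note H = x y qxh(1) qyh(1) ZZ(1-3) kpx(1-2) kpy(1-2) dX(1) dY(1) Sh SXh SYh rX(1) rY(1) pbP(1-2) fX(1) fY(1) g(1)
    kh(1) h(1) NX(2-3) NY(2-3) cX(1) cY(1) dlX(1) dlY(1)
  note HD = H[THEN homD]
  note E0 = qxh(2) qyh(2) ZZ(4-5) kpx(3) kpy(3) dX(2-4) dY(2-4) rX(2) rXz rY(2) rYz pbP(3) fX(2-3) fXz fY(2) fYz fY(4)
    g(2-3) kh(2) h(2-4) NX(4) NY(4) cX(2-3) cY(2-3) dlX(2-3) dlY(2-3)
  note EX0 = E0[THEN ass']
  have qcX: "qx \<cdot> cX = qx \<cdot> rX"
    by (rule cp2_uniq[OF SX comp_hom[OF cX(1) qxh(1)] comp_hom[OF rX(1) qxh(1)]])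
       (use HD oO in \<open>simp_all add: assoc E0 EX0\<close>)
  have qcY: "qy \<cdot> cY = qy \<cdot> rY"
    by (rule cp2_uniq[OF SY comp_hom[OF cY(1) qyh(1)] comp_hom[OF rY(1) qyh(1)]])
       (use HD oO in \<open>simp_all add: assoc E0 EX0\<close>)
  have rf: "rX \<cdot> fX = rY \<cdot> fY"
  proof -
    have "rX \<cdot> fX = (rX \<cdot> q1) \<cdot> g" using assoc_hom[OF g(1) pbP(1) rX(1)] g(2) by simp
    also have "\<dots> = rY \<cdot> fY" using assoc_hom[OF g(1) pbP(2) rY(1)] g(3) pbP(3) by simp
    finally show ?thesis .
  qed
  note E1 = E0 qcX qcY rf
  note EX1 = E1[THEN ass']
  obtain psi where psi: "psi \<in> hom C S L" "l1 \<cdot> psi = cX \<cdot> fX" "l2 \<cdot> psi = rX \<cdot> fX" "l3 \<cdot> psi = cY \<cdot> fY"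
  proof (rule zz_ex[OF A3 qxh(1) qyh(1)])
    show "cX \<cdot> fX \<in> hom C S A" "rX \<cdot> fX \<in> hom C S A" "cY \<cdot> fY \<in> hom C S A" using H by blast+
    show "qx \<cdot> (cX \<cdot> fX) = qx \<cdot> (rX \<cdot> fX)" "qy \<cdot> (rX \<cdot> fX) = qy \<cdot> (cY \<cdot> fY)"
      using HD oO by (simp_all add: assoc E1 EX1)
  qed
  obtain psi' where psi': "psi' \<in> hom C P L" "l1 \<cdot> psi' = cX \<cdot> q1" "l2 \<cdot> psi' = rX \<cdot> q1" "l3 \<cdot> psi' = cY \<cdot> q2"
  proof (rule zz_ex[OF A3 qxh(1) qyh(1)])
    show "cX \<cdot> q1 \<in> hom C P A" "rX \<cdot> q1 \<in> hom C P A" "cY \<cdot> q2 \<in> hom C P A" using H by blast+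
    show "qx \<cdot> (cX \<cdot> q1) = qx \<cdot> (rX \<cdot> q1)" "qy \<cdot> (rX \<cdot> q1) = qy \<cdot> (cY \<cdot> q2)"
      using HD oO by (simp_all add: assoc E1 EX1)
  qed
  note H2 = H psi(1) psi'(1)
  note HD2 = H2[THEN homD]
  note E2 = E1 psi(2-4) psi'(2-4)
  note EX2 = E2[THEN ass']
  have psig: "psi = psi' \<cdot> g"
    by (rule zz_uniq[OF A3 qxh(1) qyh(1)]) (use HD2 oO in \<open>simp_all add: assoc E2 EX2 hom_iff\<close>)
  obtain wx where wx: "wx \<in> hom C X KX" "pi1 \<cdot> wx = x" "pi2 \<cdot> wx = zr X A"
    using pb_ex'[OF KPX qxh(1) qxh(1) x zr_hom[OF oO(2) oO(1)]] qxh(2) zrl[OF qxh(1) oO(2)] by metis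
  obtain wy where wy: "wy \<in> hom C Y KY" "rho1 \<cdot> wy = zr Y A" "rho2 \<cdot> wy = y"
    using pb_ex'[OF KPY qyh(1) qyh(1) zr_hom[OF oO(3) oO(1)] y] qyh(2) zrl[OF qyh(1) oO(3)] by metis
  note H3 = H2 wx(1) wy(1)
  note HD3 = H3[THEN homD]
  note E3 = E2 wx(2-3) wy(2-3)
  note EX3 = E3[THEN ass']
  have psi1: "psi \<cdot> i1 = dX \<cdot> dlX"
    by (rule zz_uniq[OF A3 qxh(1) qyh(1)]) (use HD3 oO in \<open>simp_all add: assoc E3 EX3 hom_iff\<close>)
  have psi1': "psi \<cdot> i1 = dY \<cdot> dlY"
    by (rule zz_uniq[OF A3 qxh(1) qyh(1)]) (use HD3 oO in \<open>simp_all add: assoc E3 EX3 hom_iff\<close>)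
  have psi2: "psi \<cdot> i2 = dX \<cdot> wx"
    by (rule zz_uniq[OF A3 qxh(1) qyh(1)]) (use HD3 oO in \<open>simp_all add: assoc E3 EX3 hom_iff\<close>)
  have psi3: "psi \<cdot> i3 = dY \<cdot> wy"
    by (rule zz_uniq[OF A3 qxh(1) qyh(1)]) (use HD3 oO in \<open>simp_all add: assoc E3 EX3 hom_iff\<close>)
  obtain pY where pY: "pY \<in> hom C L KY" "rho1 \<cdot> pY = l2" "rho2 \<cdot> pY = l3"
    using pb_ex'[OF KPY qyh(1) qyh(1) ZZ(2) ZZ(3) ZZ(5)] by blast
  note H4 = H3 pY(1)
  note HD4 = H4[THEN homD]
  note E4 = E3 pY(2-3)
  note EX4 = E4[THEN ass']
  have pYd: "pY \<cdot> dY = Id C KY"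
    by (rule pb_uniq[OF KPY]) (use HD4 oO in \<open>simp_all add: assoc E4 EX4 hom_iff\<close>)
  obtain jL where jLk: "is_kernel C jL pY" using ker_exists[OF pY(1)] by blast
  define JL where "JL = Dom C jL"
  have jL: "jL \<in> hom C JL L" "pY \<cdot> jL = zr JL KY" using kerD[OF jLk] pY(1) JL_def by (auto dest!: homD simp: hom_iff)
  have oJL: "JL \<in> Obj C" using jL by (auto dest!: homD)
  have l2jL: "l2 \<cdot> jL = zr JL A" using ass[OF pY(2) jL(1) pY(1) kpy(1)] jL(2) zrl[OF kpy(1) oJL] by simp
  have l3jL: "l3 \<cdot> jL = zr JL A" using ass[OF pY(3) jL(1) pY(1) kpy(2)] jL(2) zrl[OF kpy(2) oJL] by simp
  obtain w where w: "w \<in> hom C JL KX" "pi1 \<cdot> w = l1 \<cdot> jL" "pi2 \<cdot> w = l2 \<cdot> jL"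
    using pb_ex'[OF KPX qxh(1) qxh(1) comp_hom[OF jL(1) ZZ(1)] comp_hom[OF jL(1) ZZ(2)]]
      ass[OF ZZ(4) jL(1) ZZ(1) qxh(1)] assoc_hom[OF jL(1) ZZ(2) qxh(1)] by metis
  have jLw: "jL = dX \<cdot> w"
    by (rule zz_uniq[OF A3 qxh(1) qyh(1)]) (use HD3 oO w jL l2jL l3jL in \<open>simp_all add: assoc E3 EX3 hom_iff\<close>)
  have uniq: "p1 = p2" if p: "p1 \<in> hom C L A" "p1 \<cdot> dX = pi1" "p1 \<cdot> dY = rho2"
     "p2 \<in> hom C L A" "p2 \<cdot> dX = pi1" "p2 \<cdot> dY = rho2" for p1 p2
  proof (rule J2[OF jLk pY(1) jL(1) dY(1) pYd p(1) p(4)])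
    show "p1 \<cdot> jL = p2 \<cdot> jL" using jLw ass[OF p(2) w(1) dX(1) p(1)] ass[OF p(5) w(1) dX(1) p(4)] by simp
    show "p1 \<cdot> dY = p2 \<cdot> dY" using p by simp
  qed
  have psih: "p \<cdot> psi = h" if p: "p \<in> hom C L A" "p \<cdot> dX = pi1" "p \<cdot> dY = rho2" for p
  proof (rule cp3_uniq[OF S comp_hom[OF psi(1) p(1)] h(1)])
    show "(p \<cdot> psi) \<cdot> i1 = h \<cdot> i1" using assoc_hom[OF Sh(1) psi(1) p(1)] psi1 ass[OF p(2) dlX(1) dX(1) p(1)] dlX h by simp
    show "(p \<cdot> psi) \<cdot> i2 = h \<cdot> i2" using assoc_hom[OF Sh(2) psi(1) p(1)] psi2 ass[OF p(2) wx(1) dX(1) p(1)] wx h by simp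
    show "(p \<cdot> psi) \<cdot> i3 = h \<cdot> i3" using assoc_hom[OF Sh(3) psi(1) p(1)] psi3 ass[OF p(3) wy(1) dY(1) p(1)] wy h by simp
  qed
  have imf0: "regular_epi C e" "mono C m" "Dom C e = Dom C (h \<cdot> k)" "Cod C e = Dom C m" "Cod C m = Cod C (h \<cdot> k)"
    "h \<cdot> k = m \<cdot> e" using im unfolding image_fact_def by auto
  have ae: "arr e" using reg_epi[OF imf0(1)] unfolding epi_def by blast
  have am: "arr m" using imf0(2) unfolding mono_def by blast
  have DHK: "Dom C (h \<cdot> k) = K0" "Cod C (h \<cdot> k) = A" using comp_hom[OF kh(1) h(1)] by (auto dest!: homD)
  have imf: "regular_epi C e" "mono C m" "e \<in> hom C K0 (Dom C m)" "m \<in> hom C (Dom C m) A" "h \<cdot> k = m \<cdot> e"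
    using imf0 ae am unfolding DHK by (auto simp: hom_iff)
  define M where "M = Dom C m"
  have oM: "M \<in> Obj C" using imf M_def by (auto dest!: homD)
  have zero_of_Id: "zero_obj C M" if "Id C M = zr M M"
    unfolding zero_obj_def initial_def terminal_def
  proof (intro conjI ballI oM)
    fix Z assume oZ: "Z \<in> Obj C"
    show "\<exists>!f. f \<in> hom C M Z"
    proof (rule ex1I[of _ "zr M Z"])
      show "zr M Z \<in> hom C M Z" using oM oZ by blast
      fix f assume f: "f \<in> hom C M Z"
      show "f = zr M Z" using idr[OF f] that zrl[OF f oM] by metis
    qed
    show "\<exists>!f. f \<in> hom C Z M"
    proof (rule ex1I[of _ "zr Z M"])
      show "zr Z M \<in> hom C Z M" using oM oZ by blast
      fix f assume f: "f \<in> hom C Z M"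
      show "f = zr Z M" using idl[OF f] that zrr[OF f oM] by metis
    qed
  qed
  have dirE: "zero_obj C M" if p: "p \<in> hom C L A" "p \<cdot> dX = pi1" "p \<cdot> dY = rho2" for p
  proof -
    have "h \<cdot> k = p \<cdot> (psi' \<cdot> (g \<cdot> k))" using psih[OF p] psig assoc_hom[OF kh(1) psi(1) p(1)]
      assoc_hom[OF kh(1) g(1) psi'(1)] by simp
    hence hk: "h \<cdot> k = zr K0 A" using kh(2) zrl[OF psi'(1) oO(15)] zrl[OF p(1) oO(15)] by simp
    have e': "e \<in> hom C K0 M" "m \<in> hom C M A" using imf M_def by auto
    have "m \<cdot> e = m \<cdot> zr K0 M" using hk imf(5) zrl[OF e'(2) oO(15)] by simp
    hence ez: "e = zr K0 M" using monoD[OF imf(2), of e K0 "zr K0 M"] e' zr_hom[OF oO(15) oM] M_def by simp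
    have "Id C M \<cdot> e = zr M M \<cdot> e" using idl[OF e'(1)] ez zrr[OF e'(1) oM] by simp
    moreover have "Cod C e = M" using e' by (auto dest!: homD)
    ultimately have "Id C M = zr M M" using epiD[OF reg_epi[OF imf(1)], of "Id C M" M "zr M M"] id_hom[OF oM] zr_hom[OF oM oM]
      by simp
    thus ?thesis using zero_of_Id by blast
  qed
  have dirC: "\<exists>p. p \<in> hom C L A \<and> p \<cdot> dX = pi1 \<and> p \<cdot> dY = rho2" if zM: "zero_obj C M"
  proof -
    have e'': "e \<in> hom C K0 M" "m \<in> hom C M A" using imf(3,4) unfolding M_def by auto
    have mz: "m = zr M A" using init_zr[OF zM e''(2)] .
    have "h \<cdot> k = zr M A \<cdot> e" using imf(5) unfolding mz .
    hence hk0: "h \<cdot> k = zr K0 A" using zrr[OF e''(1) oO(1)] by simp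
    obtain sg where sg: "sg \<in> hom C SY P" "q1 \<cdot> sg = a1 \<cdot> rY" "q2 \<cdot> sg = Id C SY"
    proof (rule pb_ex'[OF PB rX(1) rY(1) comp_hom[OF rY(1) SXh(1)] id_hom[OF oO(11)]])
      show "rX \<cdot> (a1 \<cdot> rY) = rY \<cdot> Id C SY" using ass[OF rX(2) rY(1) SXh(1) rX(1)] idl[OF rY(1)] idr[OF rY(1)] by simp
    qed
    obtain Jy where Jy: "Jy \<in> hom C SY S" "Jy \<cdot> b1 = i1" "Jy \<cdot> b2 = i3" using cp2_ex[OF SY Sh(1) Sh(3)] by blast
    obtain Jx where Jx: "Jx \<in> hom C SX S" "Jx \<cdot> a1 = i1" "Jx \<cdot> a2 = i2" using cp2_ex[OF SX Sh(1) Sh(2)] by blast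
    note H5 = H4 sg(1) Jy(1) Jx(1)
    note HD5 = H5[THEN homD]
    note E5 = E4 sg(2-3) Jy(2-3) Jx(2-3)
    note EX5 = E5[THEN ass']
    have fXJy: "fX \<cdot> Jy = a1 \<cdot> rY"
      by (rule cp2_uniq[OF SY]) (use HD5 oO in \<open>simp_all add: assoc E5 EX5 hom_iff\<close>)
    have fYJy: "fY \<cdot> Jy = Id C SY"
      by (rule cp2_uniq[OF SY]) (use HD5 oO in \<open>simp_all add: assoc E5 EX5 hom_iff\<close>)
    have fXJx: "fX \<cdot> Jx = Id C SX"
      by (rule cp2_uniq[OF SX]) (use HD5 oO in \<open>simp_all add: assoc E5 EX5 hom_iff\<close>)
    have fYJx: "fY \<cdot> Jx = b1 \<cdot> rX"
      by (rule cp2_uniq[OF SX]) (use HD5 oO in \<open>simp_all add: assoc E5 EX5 hom_iff\<close>)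
    have hJy: "h \<cdot> Jy = cY"
      by (rule cp2_uniq[OF SY]) (use HD5 oO in \<open>simp_all add: assoc E5 EX5 hom_iff\<close>)
    have hJx: "h \<cdot> Jx = cX"
      by (rule cp2_uniq[OF SX]) (use HD5 oO in \<open>simp_all add: assoc E5 EX5 hom_iff\<close>)
    note E6 = E5 fXJy fYJy fXJx fYJx hJy hJx
    note EX6 = E6[THEN ass']
    have gJy: "g \<cdot> Jy = sg"
      by (rule pb_uniq[OF PB]) (use HD5 oO in \<open>simp_all add: assoc E6 EX6 hom_iff\<close>)
    have gJx: "z = g \<cdot> (Jx \<cdot> (q1 \<cdot> z))" if z: "z \<in> hom C W P" "q2 \<cdot> z = zr W SY" for W z
    proof -
      have oW: "W \<in> Obj C" using z by (auto dest!: homD)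
      have "rY \<cdot> (q2 \<cdot> z) = zr W A" using z(2) zrl[OF rY(1) oW] by simp
      hence rXz': "rX \<cdot> (q1 \<cdot> z) = zr W A" using ass[OF pbP(3) z(1) pbP(1) rX(1)] assoc_hom[OF z(1) pbP(2) rY(1)] by simp
      show ?thesis
        by (rule pb_uniq[OF PB]) (use HD5 oO z oW rXz' in \<open>simp_all add: assoc E6 EX6 hom_iff\<close>)
    qed
    have coverg: "iso C m'" if mm: "m' \<in> hom C M' P" "mono C m'" "regular_epi C e'" "e' \<in> hom C S M'" "m' \<cdot> e' = g"
      for M' m' e'
    proof -
      obtain jq where jqk: "is_kernel C jq q2" using ker_exists[OF pbP(2)] by blast
      define JQ where "JQ = Dom C jq"
      have jq: "jq \<in> hom C JQ P" "q2 \<cdot> jq = zr JQ SY" using kerD[OF jqk] pbP(2) JQ_def by (auto dest!: homD simp: hom_iff)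
      have j1: "jq = m' \<cdot> (e' \<cdot> (Jx \<cdot> (q1 \<cdot> jq)))"
        using gJx[OF jq] ass[OF mm(5) comp_hom[OF comp_hom[OF jq(1) pbP(1)] Jx(1)] mm(4) mm(1)] by simp
      have j2: "sg = m' \<cdot> (e' \<cdot> Jy)" using gJy ass[OF mm(5) Jy(1) mm(4) mm(1)] idr[OF Jy(1)] by simp
      show ?thesis
        by (rule J[OF jqk pbP(2) jq(1) sg(1) sg(3) mm(2) mm(1) _ j1[symmetric] _ j2[symmetric]])
           (use jq Jx Jy mm pbP in auto)
    qed
    have "\<exists>phi. phi \<in> hom C P A \<and> phi \<cdot> g = h"
    proof (rule effective[OF g(1) _ k kh(1) h(1) hk0])
      fix M' m' e' assume "m' \<in> hom C M' P" "mono C m'" "regular_epi C e'" "e' \<in> hom C S M'" "m' \<cdot> e' = g"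
      thus "iso C m'" by (rule coverg)
    next
      fix t assume "t \<in> hom C P A" "t \<cdot> g = h" thus "\<exists>phi. phi \<in> hom C P A \<and> phi \<cdot> g = h" by blast
    qed
    then obtain phi where phi: "phi \<in> hom C P A" "phi \<cdot> g = h" by blast
    obtain k2 where k2k: "is_kernel C k2 psi'" using ker_exists[OF psi'(1)] by blast
    define KP where "KP = Dom C k2"
    have k2: "k2 \<in> hom C KP P" "psi' \<cdot> k2 = zr KP L" using kerD[OF k2k] psi'(1) KP_def by (auto dest!: homD simp: hom_iff)
    have oKP: "KP \<in> Obj C" using k2 by (auto dest!: homD)
    have c1: "cX \<cdot> (q1 \<cdot> k2) = zr KP A" using ass[OF psi'(2) k2(1) psi'(1) ZZ(1)] assoc_hom[OF k2(1) pbP(1) cX(1)] k2(2) zrl[OF ZZ(1) oKP] by simp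
    have c2: "rX \<cdot> (q1 \<cdot> k2) = zr KP A" using ass[OF psi'(3) k2(1) psi'(1) ZZ(2)] assoc_hom[OF k2(1) pbP(1) rX(1)] k2(2) zrl[OF ZZ(2) oKP] by simp
    have c3: "cY \<cdot> (q2 \<cdot> k2) = zr KP A" using ass[OF psi'(4) k2(1) psi'(1) ZZ(3)] assoc_hom[OF k2(1) pbP(2) cY(1)] k2(2) zrl[OF ZZ(3) oKP] by simp
    have c4: "rY \<cdot> (q2 \<cdot> k2) = zr KP A" using c2 ass[OF pbP(3) k2(1) pbP(1) rX(1)] assoc_hom[OF k2(1) pbP(2) rY(1)] by simp
    obtain kv where kvk: "is_kernel C kv (psi' \<cdot> sg)" using ker_exists[OF comp_hom[OF sg(1) psi'(1)]] by blast
    define V where "V = Dom C kv"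
    have kv: "kv \<in> hom C V SY" "(psi' \<cdot> sg) \<cdot> kv = zr V L" using kerD[OF kvk] comp_hom[OF sg(1) psi'(1)] V_def
      by (auto dest!: homD simp: hom_iff)
    have oV: "V \<in> Obj C" using kv by (auto dest!: homD)
    note H6 = H5 k2(1) kv(1) phi(1)
    note HD6 = H6[THEN homD]
    note E7 = E6 c1 c2 c3 c4
    note EX7 = E7[THEN ass']
    have psk: "(psi' \<cdot> sg) \<cdot> (q2 \<cdot> k2) = zr KP L"
      by (rule zz_uniq[OF A3 qxh(1) qyh(1)]) (use HD6 oO oKP in \<open>simp_all add: assoc E7 EX7 hom_iff\<close>)
    obtain r' where r': "r' \<in> hom C KP V" "kv \<cdot> r' = q2 \<cdot> k2"
      using ker_ex[OF kvk, of "q2 \<cdot> k2" KP] comp_hom[OF k2(1) pbP(2)] psk comp_hom[OF sg(1) psi'(1)] kv V_def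
      by (auto dest!: homD simp: hom_iff)
    obtain s' where s': "s' \<in> hom C V KP" "k2 \<cdot> s' = sg \<cdot> kv"
      using ker_ex[OF k2k, of "sg \<cdot> kv" V] comp_hom[OF kv(1) sg(1)] kv(2) assoc_hom[OF kv(1) sg(1) psi'(1)] psi'(1) KP_def
      by (auto dest!: homD simp: hom_iff)
    have "kv \<cdot> (r' \<cdot> s') = kv \<cdot> Id C V"
    proof -
      have "kv \<cdot> (r' \<cdot> s') = q2 \<cdot> (k2 \<cdot> s')" using ass[OF r'(2) s'(1) r'(1) kv(1)] assoc_hom[OF s'(1) k2(1) pbP(2)] by simp
      also have "\<dots> = kv" using s'(2) ass[OF sg(3) kv(1) sg(1) pbP(2)] idl[OF kv(1)] by simp
      finally show ?thesis using idr[OF kv(1)] by simp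
    qed
    hence rs: "r' \<cdot> s' = Id C V" using ker_mono[OF kvk, of "r' \<cdot> s'" V "Id C V"] comp_hom[OF s'(1) r'(1)] oV V_def by auto
    obtain j2 where j2k: "is_kernel C j2 r'" using ker_exists[OF r'(1)] by blast
    define J2o where "J2o = Dom C j2"
    have j2: "j2 \<in> hom C J2o KP" "r' \<cdot> j2 = zr J2o V" using kerD[OF j2k] r'(1) J2o_def by (auto dest!: homD simp: hom_iff)
    have oJ2: "J2o \<in> Obj C" using j2 by (auto dest!: homD)
    have z2: "q2 \<cdot> (k2 \<cdot> j2) = zr J2o SY"
      using ass[OF r'(2)[symmetric] j2(1) k2(1) pbP(2)] ass[OF refl j2(1) r'(1) kv(1)] j2(2) zrl[OF kv(1) oJ2] by simp
    have pz: "phi \<cdot> (k2 \<cdot> j2) = zr J2o A"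
    proof -
      have "phi \<cdot> (k2 \<cdot> j2) = phi \<cdot> (g \<cdot> (Jx \<cdot> (q1 \<cdot> (k2 \<cdot> j2))))" using gJx[OF comp_hom[OF j2(1) k2(1)] z2] by simp
      also have "\<dots> = cX \<cdot> (q1 \<cdot> (k2 \<cdot> j2))"
        using ass[OF phi(2) comp_hom[OF comp_hom[OF comp_hom[OF j2(1) k2(1)] pbP(1)] Jx(1)] g(1) phi(1)]
          ass[OF hJx comp_hom[OF comp_hom[OF j2(1) k2(1)] pbP(1)] Jx(1) h(1)] by simp
      also have "\<dots> = zr J2o A" using ass[OF c1 j2(1) comp_hom[OF k2(1) pbP(1)] cX(1)] assoc_hom[OF j2(1) k2(1) pbP(1)]
        zrr[OF j2(1) oO(1)] by simp
      finally show ?thesis .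
    qed
    have cYkv: "cY \<cdot> kv = zr V A"
    proof -
      have "zr V A = l3 \<cdot> ((psi' \<cdot> sg) \<cdot> kv)" using kv(2) zrl[OF ZZ(3) oV] by simp
      also have "\<dots> = cY \<cdot> kv" using HD6 oO by (simp add: assoc E7 EX7)
      finally show ?thesis by simp
    qed
    have ps: "phi \<cdot> (k2 \<cdot> s') = zr V A"
    proof -
      have "phi \<cdot> (k2 \<cdot> s') = phi \<cdot> (g \<cdot> (Jy \<cdot> kv))" using s'(2) gJy assoc_hom[OF kv(1) Jy(1) g(1)] by simp
      also have "\<dots> = cY \<cdot> kv" using ass[OF phi(2) comp_hom[OF kv(1) Jy(1)] g(1) phi(1)] ass[OF hJy kv(1) Jy(1) h(1)]
        by simp
      finally show ?thesis using cYkv by simp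
    qed
    have phik2: "phi \<cdot> k2 = zr KP A"
    proof (rule J2[OF j2k r'(1) j2(1) s'(1) rs comp_hom[OF k2(1) phi(1)] zr_hom[OF oKP oO(1)]])
      show "(phi \<cdot> k2) \<cdot> j2 = zr KP A \<cdot> j2" using assoc_hom[OF j2(1) k2(1) phi(1)] pz zrr[OF j2(1) oO(1)] by simp
      show "(phi \<cdot> k2) \<cdot> s' = zr KP A \<cdot> s'" using assoc_hom[OF s'(1) k2(1) phi(1)] ps zrr[OF s'(1) oO(1)] by simp
    qed
    have qxmx: "qx \<cdot> mx = zr X' QX" using kerD[OF NX(1)] qxh(1) X'_def by (auto dest!: homD simp: hom_iff)
    have qymy: "qy \<cdot> my = zr Y' QY" using kerD[OF NY(1)] qyh(1) Y'_def by (auto dest!: homD simp: hom_iff)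
    obtain D1 where D1: "D1 \<in> hom C X' L" "l1 \<cdot> D1 = mx" "l2 \<cdot> D1 = zr X' A" "l3 \<cdot> D1 = zr X' A"
      by (rule zz_ex[OF A3 qxh(1) qyh(1) NX(3) zr_hom[OF oO(13) oO(1)] zr_hom[OF oO(13) oO(1)]])
         (use qxmx zrl[OF qxh(1) oO(13)] in auto)
    obtain D3 where D3: "D3 \<in> hom C Y' L" "l1 \<cdot> D3 = zr Y' A" "l2 \<cdot> D3 = zr Y' A" "l3 \<cdot> D3 = my"
      by (rule zz_ex[OF A3 qxh(1) qyh(1) zr_hom[OF oO(14) oO(1)] zr_hom[OF oO(14) oO(1)] NY(3)])
         (use qymy zrl[OF qyh(1) oO(14)] in auto)
    note H7 = H6 D1(1) D3(1)
    note HD7 = H7[THEN homD]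
    note E8 = E7 D1(2-4) D3(2-4) qxmx qymy
    note EX8 = E8[THEN ass']
    have D1e: "D1 \<cdot> ex = psi \<cdot> i2"
      by (rule zz_uniq[OF A3 qxh(1) qyh(1)]) (use HD7 oO in \<open>simp_all add: assoc E8 EX8 hom_iff\<close>)
    have D3e: "D3 \<cdot> ey = psi \<cdot> i3"
      by (rule zz_uniq[OF A3 qxh(1) qyh(1)]) (use HD7 oO in \<open>simp_all add: assoc E8 EX8 hom_iff\<close>)
    obtain jx where jxk: "is_kernel C jx pi2" using ker_exists[OF kpx(2)] by blast
    define JX where "JX = Dom C jx"
    have jx: "jx \<in> hom C JX KX" "pi2 \<cdot> jx = zr JX A" using kerD[OF jxk] kpx(2) JX_def by (auto dest!: homD simp: hom_iff)
    have oJX: "JX \<in> Obj C" using jx by (auto dest!: homD)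
    have "qx \<cdot> (pi1 \<cdot> jx) = zr JX QX" using ass[OF kpx(3) jx(1) kpx(1) qxh(1)] jx(2) zrl[OF qxh(1) oJX] assoc_hom[OF jx(1) kpx(2) qxh(1)] by simp
    then obtain tx where tx: "tx \<in> hom C JX X'" "mx \<cdot> tx = pi1 \<cdot> jx"
      using ker_ex[OF NX(1), of "pi1 \<cdot> jx" JX] comp_hom[OF jx(1) kpx(1)] qxh(1) X'_def by (auto dest!: homD simp: hom_iff)
    obtain jy where jyk: "is_kernel C jy rho1" using ker_exists[OF kpy(1)] by blast
    define JY where "JY = Dom C jy"
    have jy: "jy \<in> hom C JY KY" "rho1 \<cdot> jy = zr JY A" using kerD[OF jyk] kpy(1) JY_def by (auto dest!: homD simp: hom_iff)
    have oJY: "JY \<in> Obj C" using jy by (auto dest!: homD)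
    have "qy \<cdot> (rho2 \<cdot> jy) = zr JY QY" using ass[OF kpy(3) jy(1) kpy(1) qyh(1)] jy(2) zrl[OF qyh(1) oJY]
      assoc_hom[OF jy(1) kpy(2) qyh(1)] by simp
    then obtain ty where ty: "ty \<in> hom C JY Y'" "my \<cdot> ty = rho2 \<cdot> jy"
      using ker_ex[OF NY(1), of "rho2 \<cdot> jy" JY] comp_hom[OF jy(1) kpy(2)] qyh(1) Y'_def by (auto dest!: homD simp: hom_iff)
    have "qx \<cdot> (l1 \<cdot> jL) = zr JL QX" using ass[OF ZZ(4) jL(1) ZZ(1) qxh(1)] l2jL zrl[OF qxh(1) oJL] assoc_hom[OF jL(1) ZZ(2) qxh(1)] by simp
    then obtain tL where tL: "tL \<in> hom C JL X'" "mx \<cdot> tL = l1 \<cdot> jL"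
      using ker_ex[OF NX(1), of "l1 \<cdot> jL" JL] comp_hom[OF jL(1) ZZ(1)] qxh(1) X'_def by (auto dest!: homD simp: hom_iff)
    note H8 = H7 jx(1) jy(1) tx(1) ty(1) jL(1) tL(1)
    note HD8 = H8[THEN homD]
    note E9 = E8 jx(2) jy(2) tx(2) ty(2) tL(2) l2jL l3jL
    note EX9 = E9[THEN ass']
    have dXjx: "dX \<cdot> jx = D1 \<cdot> tx"
      by (rule zz_uniq[OF A3 qxh(1) qyh(1)]) (use HD8 oO in \<open>simp_all add: assoc E9 EX9 hom_iff\<close>)
    have dYjy: "dY \<cdot> jy = D3 \<cdot> ty"
      by (rule zz_uniq[OF A3 qxh(1) qyh(1)]) (use HD8 oO in \<open>simp_all add: assoc E9 EX9 hom_iff\<close>)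
    have jLt: "jL = D1 \<cdot> tL"
      by (rule zz_uniq[OF A3 qxh(1) qyh(1)]) (use HD8 oO in \<open>simp_all add: assoc E9 EX9 hom_iff\<close>)
    have coverpsi: "iso C m'" if mm: "m' \<in> hom C M' L" "mono C m'" "regular_epi C e'" "e' \<in> hom C S M'" "m' \<cdot> e' = psi"
      for M' m' e'
    proof -
      have ei: "e' \<cdot> i1 \<in> hom C A M'" "e' \<cdot> i2 \<in> hom C X M'" "e' \<cdot> i3 \<in> hom C Y M'" using mm(4) Sh by auto
      obtain d1 where d1: "d1 \<in> hom C X' M'" "m' \<cdot> d1 = D1"
        by (rule orth[OF NX(5) NX(2) mm(1) mm(2) ei(2) D1(1)]) (use ass[OF mm(5) Sh(2) mm(4) mm(1)] D1e in simp)
      obtain d3 where d3: "d3 \<in> hom C Y' M'" "m' \<cdot> d3 = D3"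
        by (rule orth[OF NY(5) NY(2) mm(1) mm(2) ei(3) D3(1)]) (use ass[OF mm(5) Sh(3) mm(4) mm(1)] D3e in simp)
      obtain dd where dd: "dd \<in> hom C KY M'" "m' \<cdot> dd = dY"
      proof (rule J3[OF jyk kpy(1) jy(1) dlY(1) dlY(2) dY(1) mm(1) mm(2) ei(1) _ comp_hom[OF ty(1) d3(1)]])
        show "dY \<cdot> dlY = m' \<cdot> (e' \<cdot> i1)" using ass[OF mm(5) Sh(1) mm(4) mm(1)] psi1' by simp
        show "dY \<cdot> jy = m' \<cdot> (d3 \<cdot> ty)" using dYjy ass[OF d3(2) ty(1) d3(1) mm(1)] by simp
      qed
      show ?thesis
      proof (rule J[OF jLk pY(1) jL(1) dY(1) pYd mm(2) mm(1) comp_hom[OF tL(1) d1(1)] _ dd])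
        show "m' \<cdot> (d1 \<cdot> tL) = jL" using jLt ass[OF d1(2) tL(1) d1(1) mm(1)] by simp
      qed
    qed
    obtain kp where kpk: "is_kernel C kp psi" using ker_exists[OF psi(1)] by blast
    define KS where "KS = Dom C kp"
    have kp: "kp \<in> hom C KS S" "psi \<cdot> kp = zr KS L" using kerD[OF kpk] psi(1) KS_def by (auto dest!: homD simp: hom_iff)
    have oKS: "KS \<in> Obj C" using kp by (auto dest!: homD)
    have "psi' \<cdot> (g \<cdot> kp) = zr KS L" using kp(2) psig assoc_hom[OF kp(1) g(1) psi'(1)] by simp
    then obtain z' where z': "z' \<in> hom C KS KP" "k2 \<cdot> z' = g \<cdot> kp"
      using ker_ex[OF k2k, of "g \<cdot> kp" KS] comp_hom[OF kp(1) g(1)] psi'(1) KP_def by (auto dest!: homD simp: hom_iff)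
    have hkp: "h \<cdot> kp = zr KS A"
    proof -
      have "h \<cdot> kp = phi \<cdot> (g \<cdot> kp)" using ass[OF phi(2) kp(1) g(1) phi(1)] by simp
      also have "\<dots> = (phi \<cdot> k2) \<cdot> z'" using z'(2) assoc_hom[OF z'(1) k2(1) phi(1)] by simp
      also have "\<dots> = zr KS A" using phik2 zrr[OF z'(1) oO(1)] by simp
      finally show ?thesis .
    qed
    have "\<exists>p. p \<in> hom C L A \<and> p \<cdot> psi = h"
    proof (rule effective[OF psi(1) _ kpk kp(1) h(1) hkp])
      fix M' m' e' assume "m' \<in> hom C M' L" "mono C m'" "regular_epi C e'" "e' \<in> hom C S M'" "m' \<cdot> e' = psi"
      thus "iso C m'" by (rule coverpsi)
    next
      fix t assume "t \<in> hom C L A" "t \<cdot> psi = h" thus "\<exists>p. p \<in> hom C L A \<and> p \<cdot> psi = h" by blast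
    qed
    then obtain p where p: "p \<in> hom C L A" "p \<cdot> psi = h" by blast
    have "(p \<cdot> D1) \<cdot> ex = mx \<cdot> ex" using assoc_hom[OF NX(2) D1(1) p(1)] D1e ass[OF p(2) Sh(2) psi(1) p(1)] h(3) NX(4) by simp
    moreover have "Cod C ex = X'" using NX(2) by (auto dest!: homD)
    ultimately have pD1: "p \<cdot> D1 = mx" using epiD[OF reg_epi[OF NX(5)], of "p \<cdot> D1" A mx] comp_hom[OF D1(1) p(1)] NX(3) by simp
    have "(p \<cdot> D3) \<cdot> ey = my \<cdot> ey" using assoc_hom[OF NY(2) D3(1) p(1)] D3e ass[OF p(2) Sh(3) psi(1) p(1)] h(4) NY(4) by simp
    moreover have "Cod C ey = Y'" using NY(2) by (auto dest!: homD)
    ultimately have pD3: "p \<cdot> D3 = my" using epiD[OF reg_epi[OF NY(5)], of "p \<cdot> D3" A my] comp_hom[OF D3(1) p(1)] NY(3) by simp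
    have pi1': "p \<cdot> (dX \<cdot> dlX) = Id C A" using psi1 ass[OF p(2) Sh(1) psi(1) p(1)] h(2) by simp
    have pdX: "p \<cdot> dX = pi1"
    proof (rule J2[OF jxk kpx(2) jx(1) dlX(1) dlX(3) comp_hom[OF dX(1) p(1)] kpx(1)])
      show "(p \<cdot> dX) \<cdot> jx = pi1 \<cdot> jx" using assoc_hom[OF jx(1) dX(1) p(1)] dXjx ass[OF pD1 tx(1) D1(1) p(1)] tx(2) by simp
      show "(p \<cdot> dX) \<cdot> dlX = pi1 \<cdot> dlX" using assoc_hom[OF dlX(1) dX(1) p(1)] pi1' dlX(2) by simp
    qed
    have pdY: "p \<cdot> dY = rho2"
    proof (rule J2[OF jyk kpy(1) jy(1) dlY(1) dlY(2) comp_hom[OF dY(1) p(1)] kpy(2)])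
      show "(p \<cdot> dY) \<cdot> jy = rho2 \<cdot> jy" using assoc_hom[OF jy(1) dY(1) p(1)] dYjy ass[OF pD3 ty(1) D3(1) p(1)] ty(2) by simp
      show "(p \<cdot> dY) \<cdot> dlY = rho2 \<cdot> dlY" using assoc_hom[OF dlY(1) dY(1) p(1)] pi1' psi1 psi1' dlY(3) by simp
    qed
    show ?thesis using p(1) pdX pdY by blast
  qed
  show ?thesis
  proof (intro conjI iffI)
    assume "\<exists>p. p \<in> hom C L A \<and> p \<cdot> dX = pi1 \<and> p \<cdot> dY = rho2"
    then obtain p where "p \<in> hom C L A" "p \<cdot> dX = pi1" "p \<cdot> dY = rho2" by blast
    thus "\<exists>!p. p \<in> hom C L A \<and> p \<cdot> dX = pi1 \<and> p \<cdot> dY = rho2" using uniq by blast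
  next
    assume "\<exists>!p. p \<in> hom C L A \<and> p \<cdot> dX = pi1 \<and> p \<cdot> dY = rho2"
    thus "\<exists>p. p \<in> hom C L A \<and> p \<cdot> dX = pi1 \<and> p \<cdot> dY = rho2" by blast
  next
    assume "\<exists>!p. p \<in> hom C L A \<and> p \<cdot> dX = pi1 \<and> p \<cdot> dY = rho2"
    then obtain p where "p \<in> hom C L A" "p \<cdot> dX = pi1" "p \<cdot> dY = rho2" by blast
    thus "zero_obj C (Dom C m)" using dirE M_def by blast
  next
    assume "zero_obj C (Dom C m)"
    hence "\<exists>p. p \<in> hom C L A \<and> p \<cdot> dX = pi1 \<and> p \<cdot> dY = rho2" using dirC M_def by blast
    then obtain p where "p \<in> hom C L A" "p \<cdot> dX = pi1" "p \<cdot> dY = rho2" by blast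
    thus "\<exists>!p. p \<in> hom C L A \<and> p \<cdot> dX = pi1 \<and> p \<cdot> dY = rho2" using uniq by blast
  qed
qed


end

theorem corollary2p6:
  fixes C :: "('o,'a) cat"
    and X Y A QX QY L KX KY S SX SY P :: 'o
    and x y qx qy l1 l2 l3 pi1 pi2 rho1 rho2 dX dY
        i1 i2 i3 a1 a2 b1 b2 rX rY q1 q2 fX fY g k h e m :: 'a
  assumes hom: "homological C" and fcc: "finitely_cocomplete C"
    and x: "x \<in> hom C X A" and y: "y \<in> hom C Y A"
    and imx: "\<exists>ex mx. image_fact C x ex mx \<and> normal_mono C mx"
    and imy: "\<exists>ey my. image_fact C y ey my \<and> normal_mono C my"
    \<comment> \<open>cokernels A \<rightarrow> A/X, A \<rightarrow> A/Y\<close>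
    and qx: "is_cokernel C qx x" and QX: "Cod C qx = QX"
    and qy: "is_cokernel C qy y" and QY: "Cod C qy = QY"
    \<comment> \<open>A_3 and the kernel pairs\<close>
    and A3: "is_zigzag_limit C qx qy L l1 l2 l3"
    and KPX: "is_pullback C qx qx KX pi1 pi2"
    and KPY: "is_pullback C qy qy KY rho1 rho2"
    and dX: "dX \<in> hom C KX L" "Comp C l1 dX = pi1" "Comp C l2 dX = pi2" "Comp C l3 dX = pi2"
    and dY: "dY \<in> hom C KY L" "Comp C l1 dY = rho1" "Comp C l2 dY = rho1" "Comp C l3 dY = rho2"
    \<comment> \<open>data for the 1-weighted commutator\<close>
    and S: "is_coproduct3 C A X Y S i1 i2 i3"
    and SX: "is_coproduct2 C A X SX a1 a2"
    and SY: "is_coproduct2 C A Y SY b1 b2"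
    and rX: "rX \<in> hom C SX A" "Comp C rX a1 = Id C A" "zero_mor C (Comp C rX a2)"
    and rY: "rY \<in> hom C SY A" "Comp C rY b1 = Id C A" "zero_mor C (Comp C rY b2)"
    and PB: "is_pullback C rX rY P q1 q2"
    and fX: "fX \<in> hom C S SX" "Comp C fX i1 = a1" "Comp C fX i2 = a2" "zero_mor C (Comp C fX i3)"
    and fY: "fY \<in> hom C S SY" "Comp C fY i1 = b1" "zero_mor C (Comp C fY i2)" "Comp C fY i3 = b2"
    and g: "g \<in> hom C S P" "Comp C q1 g = fX" "Comp C q2 g = fY"
    and k: "is_kernel C k g"
    and h: "h \<in> hom C S A" "Comp C h i1 = Id C A" "Comp C h i2 = x" "Comp C h i3 = y"
    and im: "image_fact C (Comp C h k) e m"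
  shows "((\<exists>p. p \<in> hom C L A \<and> Comp C p dX = pi1 \<and> Comp C p dY = rho2)
           \<longleftrightarrow> (\<exists>!p. p \<in> hom C L A \<and> Comp C p dX = pi1 \<and> Comp C p dY = rho2))
       \<and> ((\<exists>!p. p \<in> hom C L A \<and> Comp C p dX = pi1 \<and> Comp C p dY = rho2)
           \<longleftrightarrow> zero_obj C (Dom C m))"
proof -
  interpret hcat C using hom by unfold_locales
  show ?thesis
    by (rule main[OF fcc x y imx imy qx QX qy QY A3 KPX KPY dX dY S SX SY rX rY PB fX fY g k h im])
qed

end
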